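(* Let $a>1$ and let $\mathbf R_a$ be the region bounded by the limaçon given in polar coordinates by $r=\frac{\sqrt2}{\sqrt{(2a^2+1)\pi}}(a+\cos t)$, $t\in[0,2\pi]$. This region has area $1$. Let $O$ be the origin of the polar coordinates. The probability that the triangle formed by three independent uniformly distributed points of $\mathbf R_a$ contains $O$ is $$\mathcal P_a=\frac14-\frac{12a^2(4a^2+1)}{(2a^2+1)^3\pi^2}.$$ *)

theory Defs
  imports "HOL-Analysis.Analysis"
begin

definition limacon_const :: "real \<Rightarrow> real" where
  "limacon_const a = sqrt 2 / sqrt ((2 * a^2 + 1) * pi)"

text \<open>The region bounded by the limacon r = limacon_const a * (a + cos t), t in [0, 2 pi],
  in the complex plane (identified with R^2), origin O = 0 being the pole.\<close>
definition limacon_region :: "real \<Rightarrow> complex set" where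
  "limacon_region a =
     {complex_of_real r * cis t | r t. 0 \<le> t \<and> t \<le> 2 * pi \<and> 0 \<le> r \<and>
        r \<le> limacon_const a * (a + cos t)}"

definition triangle_contains_origin_prob :: "complex set \<Rightarrow> real" where
  "triangle_contains_origin_prob R =
     measure (lborel \<Otimes>\<^sub>M lborel \<Otimes>\<^sub>M lborel)
       {(p, q, s). p \<in> R \<and> q \<in> R \<and> s \<in> R \<and> (0::complex) \<in> convex hull {p, q, s}}
     / (measure lborel R) ^ 3"

end

theory Submission
  imports Defs
begin

lemma measurable_Complex_pair[measurable]: "(\<lambda>(x,y). Complex x y) \<in> borel_measurable (borel :: (real \<times> real) measure)"
proof -
  have "continuous_on UNIV (\<lambda>(x::real,y::real). Complex x y)"
    unfolding Complex_eq case_prod_unfold by (intro continuous_intros)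
  then show ?thesis by (rule borel_measurable_continuous_onI)
qed

lemma lborel_complex_eq:
  "(lborel :: complex measure) = distr (lborel \<Otimes>\<^sub>M lborel) borel (\<lambda>(x,y). Complex x y)"
proof (rule lborel_eqI)
  fix l u :: complex assume le: "\<And>b. b \<in> Basis \<Longrightarrow> l \<bullet> b \<le> u \<bullet> b"
  have "Re l \<le> Re u" "Im l \<le> Im u" using le[of 1] le[of \<i>] by (auto simp: Basis_complex_def)
  have pre: "(\<lambda>(x,y). Complex x y) -` box l u \<inter> space (lborel \<Otimes>\<^sub>M lborel) = box (Re l) (Re u) \<times> box (Im l) (Im u)"
    by (auto simp: box_def Basis_complex_def inner_complex_def space_pair_measure)
  have meas: "(\<lambda>(x,y). Complex x y) \<in> lborel \<Otimes>\<^sub>M lborel \<rightarrow>\<^sub>M (borel :: complex measure)"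
    using measurable_Complex_pair by (simp add: lborel_prod measurable_lborel1)
  have "emeasure (distr (lborel \<Otimes>\<^sub>M lborel) borel (\<lambda>(x,y). Complex x y)) (box l u)
      = emeasure (lborel \<Otimes>\<^sub>M lborel) (box (Re l) (Re u) \<times> box (Im l) (Im u))"
    using meas by (subst emeasure_distr) (auto simp: pre)
  also have "\<dots> = ennreal ((Re u - Re l) * (Im u - Im l))"
    using \<open>Re l \<le> Re u\<close> \<open>Im l \<le> Im u\<close>
    by (simp add: lborel.emeasure_pair_measure_Times ennreal_mult)
  also have "\<dots> = (\<Prod>b\<in>Basis. (u - l) \<bullet> b)"
    by (simp add: Basis_complex_def inner_complex_def)
  finally show "emeasure (distr (lborel \<Otimes>\<^sub>M lborel) borel (\<lambda>(x,y). Complex x y)) (box l u) = (\<Prod>b\<in>Basis. (u - l) \<bullet> b)" .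
qed simp

lemma nn_integral_complex:
  assumes [measurable]: "h \<in> borel_measurable borel"
  shows "(\<integral>\<^sup>+z. h z \<partial>(lborel::complex measure)) = (\<integral>\<^sup>+y. \<integral>\<^sup>+x. h (Complex x y) \<partial>lborel \<partial>lborel)"
proof -
  have meas: "(\<lambda>(x,y). Complex x y) \<in> lborel \<Otimes>\<^sub>M lborel \<rightarrow>\<^sub>M (borel :: complex measure)"
    using measurable_Complex_pair by (simp add: lborel_prod measurable_lborel1)
  have "(\<integral>\<^sup>+z. h z \<partial>(lborel::complex measure)) = (\<integral>\<^sup>+p. h (case p of (x,y) \<Rightarrow> Complex x y) \<partial>(lborel \<Otimes>\<^sub>M lborel))"
    by (subst lborel_complex_eq) (simp add: nn_integral_distr meas)
  also have "\<dots> = (\<integral>\<^sup>+y. \<integral>\<^sup>+x. h (Complex x y) \<partial>lborel \<partial>lborel)"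
    using meas by (subst lborel_pair.nn_integral_snd[symmetric]) (auto intro: measurable_compose)
  finally show ?thesis .
qed

lemma SUP_mult_indicator_incseq:
  fixes c :: ennreal
  assumes "incseq A"
  shows "(SUP n. c * indicator (A n) x) = c * indicator (\<Union>n. A n) x"
proof (cases "x \<in> (\<Union>n. A n)")
  case True
  then obtain m where m: "x \<in> A m" by auto
  have "c \<le> (SUP n. c * indicator (A n) x)"
    using m by (intro SUP_upper2[of m]) auto
  moreover have "(SUP n. c * indicator (A n) x) \<le> c"
    by (intro SUP_least) (auto split: split_indicator)
  ultimately show ?thesis using True by (auto intro: antisym)
next
  case False
  then show ?thesis by auto
qed

lemma cot_subst:
  fixes F :: "real \<Rightarrow> ennreal"
  assumes [measurable]: "F \<in> borel_measurable borel"
  shows "(\<integral>\<^sup>+x. F x \<partial>lborel) =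
    (\<integral>\<^sup>+t. F (- cos t / sin t) * ennreal (1 / (sin t)^2) * indicator {0<..<pi} t \<partial>lborel)"
proof -
  define a :: "nat \<Rightarrow> real" where "a n = arctan (1 / (real n + 1))" for n
  define b :: "nat \<Rightarrow> real" where "b n = pi - a n" for n
  define g :: "real \<Rightarrow> real" where "g t = - cos t / sin t" for t
  define g' :: "real \<Rightarrow> real" where "g' t = 1 / (sin t)^2" for t
  have a_pos: "0 < a n" for n unfolding a_def by simp
  have a_less: "a n < pi/2" for n unfolding a_def using arctan_bounded by auto
  have a_le: "a n \<le> pi/4" for n
  proof -
    have "arctan (1 / (real n + 1)) \<le> arctan 1"
      by (subst arctan_le_iff) (auto simp: field_simps)
    then show ?thesis by (simp add: a_def arctan_one)
  qed
  have a_dec: "a (Suc n) \<le> a n" for n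
    unfolding a_def by (subst arctan_le_iff) (auto simp: field_simps)
  have ab: "a n < b n" for n using a_le[of n] pi_gt3 by (simp add: b_def)
  have sin_pos: "sin t > 0" if "t \<in> {a n..b n}" for t n
    using that a_pos[of n] by (auto simp: b_def intro!: sin_gt_zero)
  have ga: "g (a n) = - (real n + 1)" for n
  proof -
    have "sqrt (1 + (1 / (real n + 1))\<^sup>2) > 0" by (simp add: add_pos_nonneg)
    then show ?thesis
      by (simp add: g_def a_def sin_arctan cos_arctan field_simps)
  qed
  have gb: "g (b n) = real n + 1" for n
    using ga[of n] by (simp add: g_def b_def)
  have deriv: "(g has_real_derivative g' t) (at t)" if "sin t \<noteq> 0" for t
  proof -
    show ?thesis unfolding g_def g'_def using that
      apply (auto intro!: derivative_eq_intros simp: field_simps power2_eq_square)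
      using sin_cos_squared_add3[of t] by algebra
  qed
  have step: "(\<integral>\<^sup>+x. F x * indicator {- (real n + 1)..real n + 1} x \<partial>lborel)
     = (\<integral>\<^sup>+t. F (g t) * ennreal (g' t) * indicator {a n..b n} t \<partial>lborel)" for n
  proof -
    have "(\<integral>\<^sup>+x. F x * indicator {g (a n)..g (b n)} x \<partial>lborel)
        = (\<integral>\<^sup>+t. F (g t) * ennreal (g' t) * indicator {a n..b n} t \<partial>lborel)"
    proof (rule nn_integral_substitution_aux)
      show "\<And>x. x \<in> {a n..b n} \<Longrightarrow> (g has_real_derivative g' x) (at x)"
        using sin_pos deriv by force
      show "continuous_on {a n..b n} g'"
        unfolding g'_def using sin_pos by (intro continuous_intros) force
    qed (auto simp: g'_def ab)
    then show ?thesis by (simp add: ga gb)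
  qed
  have inc1: "incseq (\<lambda>n. {- (real n + 1)..real n + 1})"
    by (auto simp: incseq_def)
  have inc2: "incseq (\<lambda>n. {a n..b n})"
    unfolding incseq_def b_def
    by (auto intro: order_trans[OF antimonoD[OF decseq_SucI[of a]]] simp: a_dec)
  have U1: "(\<Union>n. {- (real n + 1)..real n + 1}) = UNIV"
  proof -
    have "x \<in> {- (real n + 1)..real n + 1}" if "nat (ceiling \<bar>x\<bar>) = n" for x n
      using that by (auto, linarith+)
    then show ?thesis by blast
  qed
  have U2: "(\<Union>n. {a n..b n}) = {0<..<pi}"
  proof (intro equalityI subsetI)
    fix t assume "t \<in> (\<Union>n. {a n..b n})"
    then obtain n where "t \<in> {a n..b n}" by auto
    then show "t \<in> {0<..<pi}" using a_pos[of n] by (auto simp: b_def)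
  next
    fix t assume t: "t \<in> {0<..<pi}"
    have l0: "(\<lambda>n. 1 / (real n + 1)) \<longlonglongrightarrow> 0"
      using LIMSEQ_inverse_real_of_nat by (simp add: inverse_eq_divide add.commute)
    have "(\<lambda>n. arctan (1 / (real n + 1))) \<longlonglongrightarrow> arctan 0"
      by (intro tendsto_intros l0)
    then have "(\<lambda>n. a n) \<longlonglongrightarrow> 0" by (simp add: a_def)
    moreover have "0 < min t (pi - t)" using t by auto
    ultimately have "eventually (\<lambda>n. a n < min t (pi - t)) sequentially"
      by (rule order_tendstoD)
    then obtain n where "a n < min t (pi - t)" by (auto simp: eventually_sequentially)
    then have "t \<in> {a n..b n}" by (auto simp: b_def)
    then show "t \<in> (\<Union>n. {a n..b n})" by blast
  qed
  have incf1: "incseq (\<lambda>n x. F x * indicator {- (real n + 1)..real n + 1} x)"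
    unfolding incseq_def le_fun_def
  proof (intro allI impI)
    fix m n :: nat and x :: real assume "m \<le> n"
    then have "{- (real m + 1)..real m + 1} \<subseteq> {- (real n + 1)..real n + 1}"
      using inc1 by (auto simp: incseq_def)
    then show "F x * indicator {- (real m + 1)..real m + 1} x \<le> F x * indicator {- (real n + 1)..real n + 1} x"
      by (intro mult_left_mono) (auto split: split_indicator)
  qed
  have incf2: "incseq (\<lambda>n t. F (g t) * ennreal (g' t) * indicator {a n..b n} t)"
    unfolding incseq_def le_fun_def
  proof (intro allI impI)
    fix m n :: nat and x :: real assume "m \<le> n"
    then have "{a m..b m} \<subseteq> {a n..b n}"
      using inc2 by (auto simp: incseq_def)
    then show "F (g x) * ennreal (g' x) * indicator {a m..b m} x \<le> F (g x) * ennreal (g' x) * indicator {a n..b n} x"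
      by (intro mult_left_mono) (auto split: split_indicator)
  qed
  have "(\<integral>\<^sup>+x. F x \<partial>lborel) = (\<integral>\<^sup>+x. (SUP n. F x * indicator {- (real n + 1)..real n + 1} x) \<partial>lborel)"
    by (subst SUP_mult_indicator_incseq[OF inc1], subst U1) simp
  also have "\<dots> = (SUP n. \<integral>\<^sup>+x. F x * indicator {- (real n + 1)..real n + 1} x \<partial>lborel)"
    using incf1 by (intro nn_integral_monotone_convergence_SUP) auto
  also have "\<dots> = (SUP n. \<integral>\<^sup>+t. F (g t) * ennreal (g' t) * indicator {a n..b n} t \<partial>lborel)"
    using step by presburger
  also have "\<dots> = (\<integral>\<^sup>+t. (SUP n. F (g t) * ennreal (g' t) * indicator {a n..b n} t) \<partial>lborel)"
    using incf2 by (intro nn_integral_monotone_convergence_SUP[symmetric]) (auto simp: g_def g'_def)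
  also have "\<dots> = (\<integral>\<^sup>+t. F (g t) * ennreal (g' t) * indicator {0<..<pi} t \<partial>lborel)"
    by (subst SUP_mult_indicator_incseq[OF inc2], subst U2) simp
  finally show ?thesis by (simp add: g_def g'_def)
qed

lemma measurable_Complex[measurable]:
  assumes [measurable]: "f \<in> borel_measurable M" "g \<in> borel_measurable M"
  shows "(\<lambda>x. Complex (f x) (g x)) \<in> borel_measurable M"
  unfolding Complex_eq by measurable

lemma upper_polar:
  fixes h :: "complex \<Rightarrow> ennreal"
  assumes [measurable]: "h \<in> borel_measurable borel"
  shows "(\<integral>\<^sup>+z. h z * indicator {z. 0 < Im z} z \<partial>lborel) =
    (\<integral>\<^sup>+t. (\<integral>\<^sup>+r. ennreal r * h (of_real r * cis t) * indicator {0<..} r \<partial>lborel) * indicator {0<..<pi} t \<partial>lborel)"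
proof -
  have inner1: "(\<integral>\<^sup>+x. h (Complex x y) \<partial>lborel) =
     (\<integral>\<^sup>+t. ennreal y * h (Complex (y * cos t / sin t) y) * ennreal (1 / (sin t)^2) * indicator {0<..<pi} t \<partial>lborel)"
    if y: "0 < y" for y
  proof -
    have "(\<integral>\<^sup>+x. h (Complex x y) \<partial>lborel) = ennreal \<bar>- y\<bar> * (\<integral>\<^sup>+s. h (Complex (0 + (- y) * s) y) \<partial>lborel)"
      using y by (intro nn_integral_real_affine) auto
    also have "\<dots> = ennreal y * (\<integral>\<^sup>+s. h (Complex (- y * s) y) \<partial>lborel)"
      using y by simp
    also have "(\<integral>\<^sup>+s. h (Complex (- y * s) y) \<partial>lborel) =
       (\<integral>\<^sup>+t. h (Complex (- y * (- cos t / sin t)) y) * ennreal (1 / (sin t)^2) * indicator {0<..<pi} t \<partial>lborel)"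
      by (rule cot_subst) measurable
    also have "ennreal y * \<dots> = (\<integral>\<^sup>+t. ennreal y * (h (Complex (- y * (- cos t / sin t)) y) * ennreal (1 / (sin t)^2) * indicator {0<..<pi} t) \<partial>lborel)"
      by (rule nn_integral_cmult[symmetric]) measurable
    finally show ?thesis by (simp add: mult.assoc)
  qed
  have inner2: "(\<integral>\<^sup>+y. ennreal y * h (Complex (y * cos t / sin t) y) * indicator {0<..} y \<partial>lborel) =
     ennreal ((sin t)^2) * (\<integral>\<^sup>+r. ennreal r * h (of_real r * cis t) * indicator {0<..} r \<partial>lborel)"
    if t: "t \<in> {0<..<pi}" for t
  proof -
    have s: "0 < sin t" using t by (auto intro: sin_gt_zero)
    have "(\<integral>\<^sup>+y. ennreal y * h (Complex (y * cos t / sin t) y) * indicator {0<..} y \<partial>lborel) =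
       ennreal \<bar>sin t\<bar> * (\<integral>\<^sup>+r. ennreal (0 + sin t * r) * h (Complex ((0 + sin t * r) * cos t / sin t) (0 + sin t * r)) * indicator {0<..} (0 + sin t * r) \<partial>lborel)"
      using s by (intro nn_integral_real_affine) auto
    also have "\<dots> = ennreal (sin t) * (\<integral>\<^sup>+r. ennreal (sin t) * (ennreal r * h (of_real r * cis t) * indicator {0<..} r) \<partial>lborel)"
    proof -
      have eq: "ennreal (0 + sin t * r) * h (Complex ((0 + sin t * r) * cos t / sin t) (0 + sin t * r)) * indicator {0<..} (0 + sin t * r)
          = ennreal (sin t) * (ennreal r * h (of_real r * cis t) * indicator {0<..} r)" for r
      proof (cases "0 < r")
        case True
        have "Complex ((0 + sin t * r) * cos t / sin t) (0 + sin t * r) = of_real r * cis t"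
          using s by (simp add: complex_eq_iff)
        moreover have "Complex (r * cos t) (sin t * r) = of_real r * cis t"
          by (simp add: complex_eq_iff)
        ultimately show ?thesis using True s by (simp add: ennreal_mult mult.assoc)
      next
        case False
        then have "\<not> 0 < sin t * r" using s by (simp add: zero_less_mult_iff)
        then show ?thesis using False by simp
      qed
      show ?thesis using s by (simp only: eq) simp
    qed
    also have "\<dots> = ennreal (sin t) * (ennreal (sin t) * (\<integral>\<^sup>+r. ennreal r * h (of_real r * cis t) * indicator {0<..} r \<partial>lborel))"
      by (subst nn_integral_cmult) auto
    finally show ?thesis using s by (simp add: ennreal_mult power2_eq_square mult.assoc)
  qed
  have "(\<integral>\<^sup>+z. h z * indicator {z. 0 < Im z} z \<partial>lborel) =
     (\<integral>\<^sup>+y. \<integral>\<^sup>+x. h (Complex x y) * indicator {z. 0 < Im z} (Complex x y) \<partial>lborel \<partial>lborel)"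
    by (rule nn_integral_complex) measurable
  also have "\<dots> = (\<integral>\<^sup>+y. (\<integral>\<^sup>+x. h (Complex x y) \<partial>lborel) * indicator {0<..} y \<partial>lborel)"
    by (intro nn_integral_cong) (auto split: split_indicator)
  also have "\<dots> = (\<integral>\<^sup>+y. (\<integral>\<^sup>+t. ennreal y * h (Complex (y * cos t / sin t) y) * ennreal (1 / (sin t)^2) * indicator {0<..<pi} t \<partial>lborel) * indicator {0<..} y \<partial>lborel)"
    by (intro nn_integral_cong) (auto simp: inner1 split: split_indicator)
  also have "\<dots> = (\<integral>\<^sup>+y. (\<integral>\<^sup>+t. ennreal y * h (Complex (y * cos t / sin t) y) * ennreal (1 / (sin t)^2) * indicator {0<..<pi} t * indicator {0<..} y \<partial>lborel) \<partial>lborel)"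
    by (intro nn_integral_cong nn_integral_multc[symmetric]) measurable
  also have "\<dots> = (\<integral>\<^sup>+t. (\<integral>\<^sup>+y. ennreal y * h (Complex (y * cos t / sin t) y) * ennreal (1 / (sin t)^2) * indicator {0<..<pi} t * indicator {0<..} y \<partial>lborel) \<partial>lborel)"
    by (rule lborel_pair.Fubini') measurable
  also have "\<dots> = (\<integral>\<^sup>+t. ennreal (1 / (sin t)^2) * indicator {0<..<pi} t * (\<integral>\<^sup>+y. ennreal y * h (Complex (y * cos t / sin t) y) * indicator {0<..} y \<partial>lborel) \<partial>lborel)"
    by (intro nn_integral_cong, subst nn_integral_cmult[symmetric]) (measurable, auto intro!: nn_integral_cong simp: mult_ac)
  also have "\<dots> = (\<integral>\<^sup>+t. (\<integral>\<^sup>+r. ennreal r * h (of_real r * cis t) * indicator {0<..} r \<partial>lborel) * indicator {0<..<pi} t \<partial>lborel)"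
  proof (intro nn_integral_cong)
    fix t :: real
    show "ennreal (1 / (sin t)^2) * indicator {0<..<pi} t * (\<integral>\<^sup>+y. ennreal y * h (Complex (y * cos t / sin t) y) * indicator {0<..} y \<partial>lborel)
       = (\<integral>\<^sup>+r. ennreal r * h (of_real r * cis t) * indicator {0<..} r \<partial>lborel) * indicator {0<..<pi} t"
    proof (cases "t \<in> {0<..<pi}")
      case True
      have s: "0 < sin t" using True by (auto intro: sin_gt_zero)
      have e: "ennreal (1 / (sin t)^2) * ennreal ((sin t)^2) = 1"
        using s by (subst ennreal_mult[symmetric]) auto
      show ?thesis using True
        by (simp add: inner2 mult.assoc[symmetric] e)
    qed simp
  qed
  finally show ?thesis .
qed

lemma measurable_cis[measurable]: "cis \<in> borel_measurable borel"
  unfolding cis.code by measurable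

lemma nn_integral_complex_reflect:
  fixes h :: "complex \<Rightarrow> ennreal"
  assumes [measurable]: "h \<in> borel_measurable borel"
  shows "(\<integral>\<^sup>+z. h z \<partial>lborel) = (\<integral>\<^sup>+z. h (- z) \<partial>lborel)"
proof -
  have "(\<integral>\<^sup>+z. h z \<partial>lborel) = (\<integral>\<^sup>+y. \<integral>\<^sup>+x. h (Complex x y) \<partial>lborel \<partial>lborel)"
    by (rule nn_integral_complex) measurable
  also have "\<dots> = (\<integral>\<^sup>+y. \<integral>\<^sup>+x. h (Complex (- x) y) \<partial>lborel \<partial>lborel)"
  proof (rule nn_integral_cong)
    fix y
    show "(\<integral>\<^sup>+x. h (Complex x y) \<partial>lborel) = (\<integral>\<^sup>+x. h (Complex (- x) y) \<partial>lborel)"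
      using nn_integral_real_affine[of "\<lambda>x. h (Complex x y)" "-1" 0] by simp
  qed
  also have "\<dots> = (\<integral>\<^sup>+y. \<integral>\<^sup>+x. h (Complex (- x) (- y)) \<partial>lborel \<partial>lborel)"
    using nn_integral_real_affine[of "\<lambda>y. \<integral>\<^sup>+x. h (Complex (- x) y) \<partial>lborel" "-1" 0] by simp
  also have "\<dots> = (\<integral>\<^sup>+z. h (- z) \<partial>lborel)"
  proof -
    have [measurable]: "(\<lambda>z::complex. h (- z)) \<in> borel_measurable borel"
      by (rule measurable_compose[OF _ assms]) simp
    have m: "- Complex x y = Complex (- x) (- y)" for x y by (simp add: complex_eq_iff)
    show ?thesis by (subst nn_integral_complex) (measurable, simp add: m)
  qed
  finally show ?thesis .
qed

lemma real_axis_null: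
  fixes h :: "complex \<Rightarrow> ennreal"
  assumes [measurable]: "h \<in> borel_measurable borel"
  shows "(\<integral>\<^sup>+z. h z * indicator {z. Im z = 0} z \<partial>lborel) = 0"
proof -
  have [measurable]: "{z::complex. Im z = 0} \<in> sets borel"
    by (intro borel_closed closed_Collect_eq continuous_intros)
  have "(\<integral>\<^sup>+z. h z * indicator {z. Im z = 0} z \<partial>lborel) =
      (\<integral>\<^sup>+y. \<integral>\<^sup>+x. h (Complex x y) * indicator {z. Im z = 0} (Complex x y) \<partial>lborel \<partial>lborel)"
    by (rule nn_integral_complex) measurable
  also have "\<dots> = (\<integral>\<^sup>+y. \<integral>\<^sup>+x. h (Complex x y) * indicator {0} y \<partial>lborel \<partial>lborel)"
    by (simp add: indicator_def)
  also have "\<dots> = 0"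
    apply (subst nn_integral_0_iff_AE)
     apply measurable
    using AE_lborel_singleton[of 0] by eventually_elim (simp add: indicator_def)
  finally show ?thesis .
qed

lemma polar:
  fixes h :: "complex \<Rightarrow> ennreal"
  assumes [measurable]: "h \<in> borel_measurable borel"
  shows "(\<integral>\<^sup>+z. h z \<partial>lborel) =
    (\<integral>\<^sup>+t. (\<integral>\<^sup>+r. ennreal r * h (of_real r * cis t) * indicator {0<..} r \<partial>lborel) * indicator {0<..<2*pi} t \<partial>lborel)"
proof -
  define G where "G t = (\<integral>\<^sup>+r. ennreal r * h (of_real r * cis t) * indicator {0<..} r \<partial>lborel)" for t
  have [measurable]: "G \<in> borel_measurable borel" unfolding G_def by measurable
  have A0: "(\<integral>\<^sup>+z. h z \<partial>lborel) = (\<integral>\<^sup>+z. h z * indicator {z. 0 < Im z} z + h z * indicator {z. Im z < 0} z + h z * indicator {z. Im z = 0} z \<partial>lborel)"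
    by (rule nn_integral_cong) (auto split: split_indicator)
  have A1: "(\<integral>\<^sup>+z. h z * indicator {z. 0 < Im z} z + h z * indicator {z. Im z < 0} z + h z * indicator {z. Im z = 0} z \<partial>lborel)
     = (\<integral>\<^sup>+z. h z * indicator {z. 0 < Im z} z + h z * indicator {z. Im z < 0} z \<partial>lborel) + (\<integral>\<^sup>+z. h z * indicator {z. Im z = 0} z \<partial>lborel)"
    by (rule nn_integral_add) measurable
  have A2: "(\<integral>\<^sup>+z. h z * indicator {z. 0 < Im z} z + h z * indicator {z. Im z < 0} z \<partial>lborel)
     = (\<integral>\<^sup>+z. h z * indicator {z. 0 < Im z} z \<partial>lborel) + (\<integral>\<^sup>+z. h z * indicator {z. Im z < 0} z \<partial>lborel)"
    by (rule nn_integral_add) measurable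
  have B: "(\<integral>\<^sup>+z. h z * indicator {z. Im z = 0} z \<partial>lborel) = 0"
    by (rule real_axis_null) measurable
  have C: "(\<integral>\<^sup>+z. h z * indicator {z. 0 < Im z} z \<partial>lborel) = (\<integral>\<^sup>+t. G t * indicator {0<..<pi} t \<partial>lborel)"
    unfolding G_def by (rule upper_polar) measurable
  have [measurable]: "(\<lambda>z::complex. h (- z)) \<in> borel_measurable borel"
    by (rule measurable_compose[OF _ assms]) simp
  have D1: "(\<integral>\<^sup>+z. h z * indicator {z. Im z < 0} z \<partial>lborel) = (\<integral>\<^sup>+z. h (- z) * indicator {z. Im z < 0} (- z) \<partial>lborel)"
    by (rule nn_integral_complex_reflect) measurable
  have D2: "(\<integral>\<^sup>+z. h (- z) * indicator {z. Im z < 0} (- z) \<partial>lborel) = (\<integral>\<^sup>+z. h (- z) * indicator {z. 0 < Im z} z \<partial>lborel)"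
    by (intro nn_integral_cong) (simp add: indicator_def)
  have D3: "(\<integral>\<^sup>+z. h (- z) * indicator {z. 0 < Im z} z \<partial>lborel) = (\<integral>\<^sup>+t. (\<integral>\<^sup>+r. ennreal r * h (- (of_real r * cis t)) * indicator {0<..} r \<partial>lborel) * indicator {0<..<pi} t \<partial>lborel)"
    by (rule upper_polar[of "\<lambda>z. h (- z)"]) measurable
  have D4: "(\<integral>\<^sup>+t. (\<integral>\<^sup>+r. ennreal r * h (- (of_real r * cis t)) * indicator {0<..} r \<partial>lborel) * indicator {0<..<pi} t \<partial>lborel) = (\<integral>\<^sup>+t. G (t + pi) * indicator {0<..<pi} t \<partial>lborel)"
  proof (rule nn_integral_cong)
    fix t :: real
    have c: "- (of_real r * cis t) = of_real r * cis (t + pi)" for r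
      by (simp add: complex_eq_iff)
    show "(\<integral>\<^sup>+r. ennreal r * h (- (of_real r * cis t)) * indicator {0<..} r \<partial>lborel) * indicator {0<..<pi} t = G (t + pi) * indicator {0<..<pi} t"
      unfolding G_def c ..
  qed
  have D5: "(\<integral>\<^sup>+t. G t * indicator {pi<..<2*pi} t \<partial>lborel) = ennreal \<bar>1\<bar> * (\<integral>\<^sup>+t. G (pi + 1 * t) * indicator {pi<..<2*pi} (pi + 1 * t) \<partial>lborel)"
    by (rule nn_integral_real_affine) measurable
  have D6: "(\<integral>\<^sup>+t. G (pi + 1 * t) * indicator {pi<..<2*pi} (pi + 1 * t) \<partial>lborel) = (\<integral>\<^sup>+t. G (t + pi) * indicator {0<..<pi} t \<partial>lborel)"
    by (rule nn_integral_cong) (auto simp: add.commute split: split_indicator)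
  have E1: "(\<integral>\<^sup>+t. G t * indicator {0<..<pi} t \<partial>lborel) + (\<integral>\<^sup>+t. G t * indicator {pi<..<2*pi} t \<partial>lborel)
        = (\<integral>\<^sup>+t. G t * indicator {0<..<pi} t + G t * indicator {pi<..<2*pi} t \<partial>lborel)"
    by (rule nn_integral_add[symmetric]) measurable
  have ae: "AE t in lborel. G t * indicator {0<..<pi} t + G t * indicator {pi<..<2*pi} t = G t * indicator {0<..<2*pi} t"
    using AE_lborel_singleton[of pi] by eventually_elim (auto split: split_indicator)
  have E2: "(\<integral>\<^sup>+t. G t * indicator {0<..<pi} t + G t * indicator {pi<..<2*pi} t \<partial>lborel) = (\<integral>\<^sup>+t. G t * indicator {0<..<2*pi} t \<partial>lborel)"
    using ae by (rule nn_integral_cong_AE)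
  have "(\<integral>\<^sup>+z. h z \<partial>lborel) = (\<integral>\<^sup>+t. G t * indicator {0<..<2*pi} t \<partial>lborel)"
    unfolding A0 A1 A2 B C D1 D2 D3 D4 E2[symmetric] E1[symmetric] D5 D6 by simp
  then show ?thesis unfolding G_def .
qed

lemma FTC_open:
  fixes f F :: "real \<Rightarrow> real"
  assumes [measurable]: "f \<in> borel_measurable borel"
  assumes "\<And>x. x \<in> {a..b} \<Longrightarrow> (F has_real_derivative f x) (at x)"
      and "\<And>x. x \<in> {a..b} \<Longrightarrow> 0 \<le> f x" and "a \<le> b"
  shows "(\<integral>\<^sup>+x. ennreal (f x) * indicator {a<..<b} x \<partial>lborel) = ennreal (F b - F a)"
proof -
  have "AE x in lborel. ennreal (f x) * indicator {a<..<b} x = ennreal (f x) * indicator {a..b} x"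
    using AE_lborel_singleton[of a] AE_lborel_singleton[of b]
    by eventually_elim (auto split: split_indicator)
  then have "(\<integral>\<^sup>+x. ennreal (f x) * indicator {a<..<b} x \<partial>lborel) = (\<integral>\<^sup>+x. ennreal (f x) * indicator {a..b} x \<partial>lborel)"
    by (rule nn_integral_cong_AE)
  also have "\<dots> = ennreal (F b - F a)"
    using assms by (intro nn_integral_FTC_Icc) auto
  finally show ?thesis .
qed

lemma FTC_left_open:
  fixes f F :: "real \<Rightarrow> real"
  assumes [measurable]: "f \<in> borel_measurable borel"
  assumes "\<And>x. x \<in> {a..b} \<Longrightarrow> (F has_real_derivative f x) (at x)"
      and "\<And>x. x \<in> {a..b} \<Longrightarrow> 0 \<le> f x" and "a \<le> b"
  shows "(\<integral>\<^sup>+x. ennreal (f x) * indicator {a<..b} x \<partial>lborel) = ennreal (F b - F a)"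
proof -
  have "AE x in lborel. ennreal (f x) * indicator {a<..b} x = ennreal (f x) * indicator {a..b} x"
    using AE_lborel_singleton[of a]
    by eventually_elim (auto split: split_indicator)
  then have "(\<integral>\<^sup>+x. ennreal (f x) * indicator {a<..b} x \<partial>lborel) = (\<integral>\<^sup>+x. ennreal (f x) * indicator {a..b} x \<partial>lborel)"
    by (rule nn_integral_cong_AE)
  also have "\<dots> = ennreal (F b - F a)"
    using assms by (intro nn_integral_FTC_Icc) auto
  finally show ?thesis .
qed

definition rho :: "real \<Rightarrow> real \<Rightarrow> real" where
  "rho a t = limacon_const a * (a + cos t)"

lemma limacon_const_pos: "a > 1 \<Longrightarrow> limacon_const a > 0"
  unfolding limacon_const_def by (auto intro!: divide_pos_pos mult_pos_pos add_pos_nonneg)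

lemma limacon_const_sq: "(limacon_const a)^2 = 2 / ((2 * a^2 + 1) * pi)"
proof -
  have "0 \<le> (2 * a^2 + 1) * pi" by (simp add: add_nonneg_nonneg)
  then show ?thesis unfolding limacon_const_def by (simp add: power_divide)
qed

lemma rho_pos: "a > 1 \<Longrightarrow> rho a t > 0"
proof -
  assume a: "a > 1"
  have "-1 \<le> cos t" by simp
  then have "a + cos t > 0" using a by linarith
  then show ?thesis unfolding rho_def using limacon_const_pos[OF a] by (intro mult_pos_pos)
qed

lemma rho_measurable[measurable]: "rho a \<in> borel_measurable borel"
  unfolding rho_def by measurable

lemma limacon_region_char:
  assumes a: "a > 1"
  shows "limacon_region a = {z. (cmod z)^2 \<le> limacon_const a * (a * cmod z + Re z)}"
proof (intro equalityI subsetI)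
  fix z assume "z \<in> limacon_region a"
  then obtain r t where z: "z = of_real r * cis t" and r: "0 \<le> r" "r \<le> limacon_const a * (a + cos t)"
    unfolding limacon_region_def by auto
  have cm: "cmod z = r" using r by (simp add: z norm_mult)
  have re: "Re z = r * cos t" by (simp add: z)
  have "r * r \<le> r * (limacon_const a * (a + cos t))" using r by (intro mult_left_mono) auto
  then show "z \<in> {z. (cmod z)^2 \<le> limacon_const a * (a * cmod z + Re z)}"
    by (simp add: cm re power2_eq_square algebra_simps)
next
  fix z assume "z \<in> {z. (cmod z)^2 \<le> limacon_const a * (a * cmod z + Re z)}"
  then have ineq: "(cmod z)^2 \<le> limacon_const a * (a * cmod z + Re z)" by simp
  show "z \<in> limacon_region a"
  proof (cases "z = 0")
    case True
    have "z = of_real 0 * cis 0" "0 \<le> (0::real)" "0 \<le> 2 * pi"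
      "(0::real) \<le> limacon_const a * (a + cos 0)"
      using True limacon_const_pos[OF a] a by auto
    then show ?thesis unfolding limacon_region_def by blast
  next
    case False
    define r where "r = cmod z"
    define t where "t = Arg2pi z"
    have r: "r > 0" using False by (simp add: r_def)
    have z: "z = of_real r * cis t"
      unfolding r_def t_def cis_conv_exp by (rule Arg2pi_eq)
    have re: "Re z = r * cos t" unfolding r_def t_def by (simp add: cos_Arg2pi)
    have "r * r \<le> r * (limacon_const a * (a + cos t))"
      using ineq by (simp add: r_def[symmetric] re power2_eq_square algebra_simps)
    then have "r \<le> limacon_const a * (a + cos t)" using r by simp
    moreover have "0 \<le> t" "t \<le> 2 * pi" using Arg2pi_ge_0[of z] Arg2pi_lt_2pi[of z] by (auto simp: t_def)
    ultimately have "z = of_real r * cis t \<and> 0 \<le> t \<and> t \<le> 2 * pi \<and> 0 \<le> r \<and> r \<le> limacon_const a * (a + cos t)"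
      using z r by auto
    then show ?thesis unfolding limacon_region_def by blast
  qed
qed

lemma limacon_region_polar:
  assumes a: "a > 1" and r: "r > 0"
  shows "of_real r * cis t \<in> limacon_region a \<longleftrightarrow> r \<le> rho a t"
proof -
  have cm: "cmod (of_real r * cis t) = r" using r by (simp add: norm_mult)
  have re: "Re (of_real r * cis t) = r * cos t" by simp
  have "(cmod (of_real r * cis t))^2 \<le> limacon_const a * (a * cmod (of_real r * cis t) + Re (of_real r * cis t))
     \<longleftrightarrow> r * r \<le> r * rho a t"
    unfolding cm re rho_def by (simp add: power2_eq_square algebra_simps)
  also have "\<dots> \<longleftrightarrow> r \<le> rho a t" using r by (rule mult_le_cancel_left_pos)
  finally show ?thesis unfolding limacon_region_char[OF a] by simp
qed

lemma limacon_region_borel[measurable]: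
  assumes a: "a > 1"
  shows "limacon_region a \<in> sets borel"
  unfolding limacon_region_char[OF a]
  by (intro borel_closed closed_Collect_le continuous_intros)

lemma polar_region:
  fixes h :: "complex \<Rightarrow> ennreal" and W :: "real \<Rightarrow> ennreal"
  assumes a: "a > 1"
  assumes [measurable]: "h \<in> borel_measurable borel" "W \<in> borel_measurable borel"
  assumes hW: "\<And>r t. r > 0 \<Longrightarrow> h (of_real r * cis t) = indicator (limacon_region a) (of_real r * cis t) * W t"
  shows "(\<integral>\<^sup>+z. h z \<partial>lborel) = (\<integral>\<^sup>+t. ennreal ((rho a t)^2 / 2) * W t * indicator {0<..<2*pi} t \<partial>lborel)"
proof -
  have inner: "(\<integral>\<^sup>+r. ennreal r * h (of_real r * cis t) * indicator {0<..} r \<partial>lborel) = ennreal ((rho a t)^2 / 2) * W t" for t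
  proof -
    have "(\<integral>\<^sup>+r. ennreal r * h (of_real r * cis t) * indicator {0<..} r \<partial>lborel)
        = (\<integral>\<^sup>+r. W t * (ennreal r * indicator {0<..rho a t} r) \<partial>lborel)"
    proof (rule nn_integral_cong)
      fix r :: real
      show "ennreal r * h (of_real r * cis t) * indicator {0<..} r = W t * (ennreal r * indicator {0<..rho a t} r)"
      proof (cases "r > 0")
        case True
        then show ?thesis using hW[OF True, of t] limacon_region_polar[OF a True, of t]
          by (auto simp: indicator_def mult_ac)
      next
        case False
        then show ?thesis by simp
      qed
    qed
    also have "\<dots> = W t * (\<integral>\<^sup>+r. ennreal r * indicator {0<..rho a t} r \<partial>lborel)"
      by (rule nn_integral_cmult) measurable
    also have "(\<integral>\<^sup>+r. ennreal r * indicator {0<..rho a t} r \<partial>lborel) = ennreal ((\<lambda>x. x^2/2) (rho a t) - (\<lambda>x. x^2/2) 0)"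
      using rho_pos[OF a, of t] by (intro FTC_left_open) (auto intro!: derivative_eq_intros)
    finally show ?thesis by (simp add: mult.commute)
  qed
  have "(\<integral>\<^sup>+z. h z \<partial>lborel) = (\<integral>\<^sup>+t. (\<integral>\<^sup>+r. ennreal r * h (of_real r * cis t) * indicator {0<..} r \<partial>lborel) * indicator {0<..<2*pi} t \<partial>lborel)"
    by (rule polar) measurable
  also have "\<dots> = (\<integral>\<^sup>+t. ennreal ((rho a t)^2 / 2) * W t * indicator {0<..<2*pi} t \<partial>lborel)"
    by (simp only: inner)
  finally show ?thesis .
qed

definition Phi :: "real \<Rightarrow> real \<Rightarrow> real" where
  "Phi a t = (limacon_const a)^2 / 2 * (a^2 * t + 2 * a * sin t + (t + sin t * cos t) / 2)"

lemma Phi_deriv: "(Phi a has_real_derivative (rho a t)^2 / 2) (at t)"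
  unfolding Phi_def rho_def
  by (auto intro!: derivative_eq_intros simp: field_simps power2_eq_square)
     (use sin_cos_squared_add3[of t] in algebra)

lemma area_limacon:
  assumes a: "a > 1"
  shows "emeasure lborel (limacon_region a) = 1"
proof -
  have "emeasure lborel (limacon_region a) = (\<integral>\<^sup>+z. indicator (limacon_region a) z \<partial>lborel)"
    using a by simp
  also have "\<dots> = (\<integral>\<^sup>+t. ennreal ((rho a t)^2 / 2) * 1 * indicator {0<..<2*pi} t \<partial>lborel)"
    using a by (intro polar_region) auto
  also have "\<dots> = ennreal (Phi a (2*pi) - Phi a 0)"
    by (simp only: mult_1_right, intro FTC_open) (auto simp: Phi_deriv)
  also have "Phi a (2*pi) - Phi a 0 = 1"
  proof -
    have p: "2 * a^2 + 1 \<noteq> 0" using zero_le_power2[of a] by linarith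
    have "Phi a (2*pi) - Phi a 0 = (limacon_const a)^2 * ((2*a^2+1)*pi) / 2"
      by (simp add: Phi_def algebra_simps)
    also have "\<dots> = 1" unfolding limacon_const_sq using p by simp
    finally show ?thesis .
  qed
  finally show ?thesis by simp
qed

definition cr :: "complex \<Rightarrow> complex \<Rightarrow> real" where
  "cr p q = Im (cnj p * q)"

lemma cr_eq: "cr p q = Re p * Im q - Im p * Re q"
  by (simp add: cr_def)

lemma cr_measurable[measurable]: "(\<lambda>x. cr (f x) (g x)) \<in> borel_measurable M"
  if [measurable]: "f \<in> borel_measurable M" "g \<in> borel_measurable M"
  unfolding cr_eq by measurable

definition kk :: "real \<Rightarrow> real" where
  "kk a = 4 * a / ((2 * a^2 + 1) * pi)"

lemma Phi_mono: "x \<le> y \<Longrightarrow> Phi a x \<le> Phi a y"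
  by (rule DERIV_nonneg_imp_nondecreasing[of x y "Phi a"])
     (auto intro!: exI[of _ "(rho a _)^2 / 2"] Phi_deriv)

lemma sin_pos_iff1:
  assumes "- pi < x" "x < 2 * pi"
  shows "0 < sin x \<longleftrightarrow> 0 < x \<and> x < pi"
proof (cases "0 < x \<and> x < pi")
  case True
  then show ?thesis by (auto intro: sin_gt_zero)
next
  case False
  then consider "- pi < x" "x \<le> 0" | "pi \<le> x" "x < 2 * pi" using assms by linarith
  then have "sin x \<le> 0"
  proof cases
    case 1
    then have "0 \<le> sin (- x)" by (intro sin_ge_zero) auto
    then show ?thesis by simp
  next
    case 2
    then have "0 \<le> sin (x - pi)" by (intro sin_ge_zero) auto
    then show ?thesis by (simp add: sin_diff)
  qed
  then show ?thesis using False by auto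
qed

lemma sin_pos_iff2:
  assumes "- 2 * pi < x" "x < pi"
  shows "0 < sin x \<longleftrightarrow> (- 2 * pi < x \<and> x < - pi) \<or> (0 < x \<and> x < pi)"
proof (cases "- pi < x")
  case True
  then show ?thesis using sin_pos_iff1[of x] assms by auto
next
  case False
  have "sin x = sin (x + 2 * pi)" by simp
  moreover have "0 < sin (x + 2 * pi) \<longleftrightarrow> 0 < x + 2 * pi \<and> x + 2 * pi < pi"
    using assms False by (intro sin_pos_iff1) auto
  ultimately show ?thesis using False assms by auto
qed

lemma half_alg: "(limacon_const a)^2 / 2 * (a^2 * pi - 4 * a * s + pi / 2) = 1/2 - kk a * s"
proof -
  define D where "D = (2 * a^2 + 1) * pi"
  have D: "D \<noteq> 0" unfolding D_def using zero_le_power2[of a] by (intro no_zero_divisors) (linarith, simp)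
  have e: "a^2 * pi + pi / 2 = D / 2" by (simp add: D_def algebra_simps)
  have "(limacon_const a)^2 / 2 * (a^2 * pi - 4 * a * s + pi / 2) = (2 / D) / 2 * ((a^2 * pi + pi / 2) - 4 * a * s)"
    unfolding limacon_const_sq D_def by (simp add: algebra_simps)
  also have "\<dots> = 1/2 - (4 * a / D) * s" unfolding e using D by (simp add: field_simps)
  finally show ?thesis by (simp add: kk_def D_def)
qed

lemma half_value1: "Phi a (t + pi) - Phi a t = 1/2 - kk a * sin t"
proof -
  have "Phi a (t + pi) - Phi a t = (limacon_const a)^2 / 2 * (a^2 * pi - 4 * a * sin t + pi / 2)"
    by (simp add: Phi_def algebra_simps)
  also have "\<dots> = 1/2 - kk a * sin t"
    by (rule half_alg)
  finally show ?thesis .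
qed

lemma half_value2: "(Phi a (t - pi) - Phi a 0) + (Phi a (2*pi) - Phi a t) = 1/2 - kk a * sin t"
proof -
  have "(Phi a (t - pi) - Phi a 0) + (Phi a (2*pi) - Phi a t) = (limacon_const a)^2 / 2 * (a^2 * pi - 4 * a * sin t + pi / 2)"
    by (simp add: Phi_def sin_diff cos_diff) (simp add: field_simps)
  also have "\<dots> = 1/2 - kk a * sin t"
    by (rule half_alg)
  finally show ?thesis .
qed

lemma half_measure:
  assumes a: "a > 1" and p: "p \<noteq> 0"
  shows "emeasure lborel (limacon_region a \<inter> {z. 0 < cr p z}) = ennreal (1/2 - kk a * Im p / cmod p)"
proof -
  define \<alpha> where "\<alpha> = Arg2pi p"
  have \<alpha>: "0 \<le> \<alpha>" "\<alpha> < 2 * pi" using Arg2pi_ge_0[of p] Arg2pi_lt_2pi[of p] by (auto simp: \<alpha>_def)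
  have cp: "cmod p > 0" using p by simp
  have re: "Re p = cmod p * cos \<alpha>" and im: "Im p = cmod p * sin \<alpha>"
    by (simp_all add: \<alpha>_def cos_Arg2pi sin_Arg2pi)
  have [measurable]: "{t. 0 < sin (t - \<alpha>)} \<in> sets borel"
    by measurable
  have crp: "cr p (of_real r * cis t) = r * cmod p * sin (t - \<alpha>)" for r t
    by (simp add: cr_eq re im sin_diff algebra_simps)
  have [measurable]: "limacon_region a \<inter> {z. 0 < cr p z} \<in> sets borel"
    using a by measurable
  have "emeasure lborel (limacon_region a \<inter> {z. 0 < cr p z}) = (\<integral>\<^sup>+z. indicator (limacon_region a \<inter> {z. 0 < cr p z}) z \<partial>lborel)"
    by simp
  also have "\<dots> = (\<integral>\<^sup>+t. ennreal ((rho a t)^2 / 2) * indicator {t. 0 < sin (t - \<alpha>)} t * indicator {0<..<2*pi} t \<partial>lborel)"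
  proof (rule polar_region[OF a])
    fix r t :: real assume r: "r > 0"
    have "0 < cr p (of_real r * cis t) \<longleftrightarrow> 0 < sin (t - \<alpha>)"
    proof -
      have "r * cmod p > 0" using r cp by simp
      have m: "\<And>c x. c > 0 \<Longrightarrow> (0 < c * x) = (0 < (x::real))" by (simp add: zero_less_mult_iff)
      show ?thesis unfolding crp by (rule m) fact
    qed
    then show "indicator (limacon_region a \<inter> {z. 0 < cr p z}) (of_real r * cis t) =
        indicator (limacon_region a) (of_real r * cis t) * (indicator {t. 0 < sin (t - \<alpha>)} t :: ennreal)"
      by (simp add: indicator_def)
  qed measurable
  also have "\<dots> = ennreal (1/2 - kk a * sin \<alpha>)"
  proof (cases "\<alpha> < pi")
    case True
    have "(\<integral>\<^sup>+t. ennreal ((rho a t)^2 / 2) * indicator {t. 0 < sin (t - \<alpha>)} t * indicator {0<..<2*pi} t \<partial>lborel)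
        = (\<integral>\<^sup>+t. ennreal ((rho a t)^2 / 2) * indicator {\<alpha><..<\<alpha>+pi} t \<partial>lborel)"
    proof (rule nn_integral_cong)
      fix t :: real
      have "(0 < sin (t - \<alpha>) \<and> 0 < t \<and> t < 2 * pi) \<longleftrightarrow> (\<alpha> < t \<and> t < \<alpha> + pi)"
      proof (cases "0 < t \<and> t < 2 * pi")
        case True': True
        then show ?thesis using sin_pos_iff1[of "t - \<alpha>"] \<alpha> True by auto
      next
        case False
        then show ?thesis using \<alpha> True by auto
      qed
      then show "ennreal ((rho a t)^2 / 2) * indicator {t. 0 < sin (t - \<alpha>)} t * indicator {0<..<2*pi} t =
          ennreal ((rho a t)^2 / 2) * indicator {\<alpha><..<\<alpha>+pi} t"
        by (auto simp: indicator_def)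
    qed
    also have "\<dots> = ennreal (Phi a (\<alpha> + pi) - Phi a \<alpha>)"
      by (intro FTC_open) (auto simp: Phi_deriv)
    finally show ?thesis by (simp add: half_value1)
  next
    case False
    have "(\<integral>\<^sup>+t. ennreal ((rho a t)^2 / 2) * indicator {t. 0 < sin (t - \<alpha>)} t * indicator {0<..<2*pi} t \<partial>lborel)
        = (\<integral>\<^sup>+t. ennreal ((rho a t)^2 / 2) * indicator {0<..<\<alpha>-pi} t + ennreal ((rho a t)^2 / 2) * indicator {\<alpha><..<2*pi} t \<partial>lborel)"
    proof (rule nn_integral_cong)
      fix t :: real
      have "(0 < sin (t - \<alpha>) \<and> 0 < t \<and> t < 2 * pi) \<longleftrightarrow> (0 < t \<and> t < \<alpha> - pi) \<or> (\<alpha> < t \<and> t < 2 * pi)"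
      proof (cases "0 < t \<and> t < 2 * pi")
        case True
        then show ?thesis using sin_pos_iff2[of "t - \<alpha>"] \<alpha> False by auto
      next
        case False': False
        then show ?thesis using \<alpha> False by auto
      qed
      moreover have "\<not> ((0 < t \<and> t < \<alpha> - pi) \<and> (\<alpha> < t \<and> t < 2 * pi))" by auto
      ultimately show "ennreal ((rho a t)^2 / 2) * indicator {t. 0 < sin (t - \<alpha>)} t * indicator {0<..<2*pi} t =
          ennreal ((rho a t)^2 / 2) * indicator {0<..<\<alpha>-pi} t + ennreal ((rho a t)^2 / 2) * indicator {\<alpha><..<2*pi} t"
        by (auto simp: indicator_def)
    qed
    also have "\<dots> = (\<integral>\<^sup>+t. ennreal ((rho a t)^2 / 2) * indicator {0<..<\<alpha>-pi} t \<partial>lborel) + (\<integral>\<^sup>+t. ennreal ((rho a t)^2 / 2) * indicator {\<alpha><..<2*pi} t \<partial>lborel)"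
      by (rule nn_integral_add) measurable
    also have "(\<integral>\<^sup>+t. ennreal ((rho a t)^2 / 2) * indicator {0<..<\<alpha>-pi} t \<partial>lborel) = ennreal (Phi a (\<alpha> - pi) - Phi a 0)"
      using False by (intro FTC_open) (auto simp: Phi_deriv)
    also have "(\<integral>\<^sup>+t. ennreal ((rho a t)^2 / 2) * indicator {\<alpha><..<2*pi} t \<partial>lborel) = ennreal (Phi a (2*pi) - Phi a \<alpha>)"
      using \<alpha> by (intro FTC_open) (auto simp: Phi_deriv)
    also have "ennreal (Phi a (\<alpha> - pi) - Phi a 0) + ennreal (Phi a (2*pi) - Phi a \<alpha>) = ennreal ((Phi a (\<alpha> - pi) - Phi a 0) + (Phi a (2*pi) - Phi a \<alpha>))"
      using False \<alpha> Phi_mono[of 0 "\<alpha> - pi" a] Phi_mono[of \<alpha> "2*pi" a] by (intro ennreal_plus[symmetric]) auto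
    finally show ?thesis by (simp add: half_value2)
  qed
  also have "sin \<alpha> = Im p / cmod p" using cp by (simp add: im)
  finally show ?thesis by simp
qed

definition PsiG :: "real \<Rightarrow> real \<Rightarrow> real \<Rightarrow> real \<Rightarrow> real" where
  "PsiG C k a t = C / 2 * ((a^2 * t + 2 * a * sin t + (t + sin t * cos t) / 2) / 4
      + k * (a + cos t)^3 / 3
      + k^2 * (a^2 * (t - sin t * cos t) / 2 + 2 * a * (sin t)^3 / 3 + t / 8
                    - sin t * cos t * ((cos t)^2 - (sin t)^2) / 8))"

lemma PsiG_value: "PsiG C k a (2 * pi) - PsiG C k a 0 = C / 2 * ((2 * pi * a^2 + pi) / 4 + k^2 * (a^2 * pi + pi / 4))"
  by (simp add: PsiG_def) (simp add: field_simps)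

definition Psi :: "real \<Rightarrow> real \<Rightarrow> real" where
  "Psi a t = (limacon_const a)^2 / 2 * ((a^2 * t + 2 * a * sin t + (t + sin t * cos t) / 2) / 4
      + kk a * (a + cos t)^3 / 3
      + (kk a)^2 * (a^2 * (t - sin t * cos t) / 2 + 2 * a * (sin t)^3 / 3 + t / 8
                    - sin t * cos t * ((cos t)^2 - (sin t)^2) / 8))"

lemma Psi_deriv: "(Psi a has_real_derivative (rho a t)^2 / 2 * (1/2 - kk a * sin t)^2) (at t)"
  unfolding Psi_def rho_def
  by (auto intro!: derivative_eq_intros simp: field_simps power2_eq_square power3_eq_cube)
     (use sin_cos_squared_add3[of t] in algebra)

lemma Psi_deriv2: "(Psi a has_real_derivative (rho a t)^2 * (1/2 - kk a * sin t)^2 / 2) (at t)"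
  using Psi_deriv[of a t] by simp

lemma Psi_value: "Psi a (2 * pi) - Psi a 0 = 1/4 + 4 * a^2 * (4 * a^2 + 1) / ((2 * a^2 + 1)^3 * pi^2)"
proof -
  define D where "D = (2 * a^2 + 1) * pi"
  have D: "D \<noteq> 0" unfolding D_def using zero_le_power2[of a] by (intro no_zero_divisors) (linarith, simp)
  have "Psi a (2 * pi) - Psi a 0 = (limacon_const a)^2 / 2 * ((2 * pi * a^2 + pi) / 4 + (kk a)^2 * (a^2 * pi + pi / 4))"
  proof -
    have "Psi a t = PsiG ((limacon_const a)^2) (kk a) a t" for t
      unfolding Psi_def PsiG_def ..
    then show ?thesis using PsiG_value by presburger
  qed
  also have "\<dots> = (2 / D) / 2 * (D / 4 + (4 * a / D)^2 * (pi * (4 * a^2 + 1) / 4))"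
  proof -
    have e1: "2 * pi * a^2 + pi = D" by (simp add: D_def algebra_simps)
    have e2: "a^2 * pi + pi / 4 = pi * (4 * a^2 + 1) / 4" by (simp add: algebra_simps)
    show ?thesis unfolding limacon_const_sq kk_def D_def[symmetric] e1 e2 ..
  qed
  also have "\<dots> = 1/4 + 4 * a^2 * pi * (4 * a^2 + 1) / D^3"
    using D by (simp add: field_simps power2_eq_square power3_eq_cube)
  also have "\<dots> = 1/4 + 4 * a^2 * (4 * a^2 + 1) / ((2 * a^2 + 1)^3 * pi^2)"
    unfolding D_def by (simp add: power_mult_distrib power2_eq_square power3_eq_cube mult_ac)
  finally show ?thesis .
qed

lemma Vint:
  assumes a: "a > 1"
  shows "(\<integral>\<^sup>+z. indicator (limacon_region a) z * ennreal ((1/2 - kk a * Im z / cmod z)^2) \<partial>lborel)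
    = ennreal (1/4 + 4 * a^2 * (4 * a^2 + 1) / ((2 * a^2 + 1)^3 * pi^2))"
proof -
  have "(\<integral>\<^sup>+z. indicator (limacon_region a) z * ennreal ((1/2 - kk a * Im z / cmod z)^2) \<partial>lborel)
      = (\<integral>\<^sup>+t. ennreal ((rho a t)^2 / 2) * ennreal ((1/2 - kk a * sin t)^2) * indicator {0<..<2*pi} t \<partial>lborel)"
  proof (rule polar_region[OF a])
    fix r t :: real assume r: "r > 0"
    have "Im (of_real r * cis t) / cmod (of_real r * cis t) = sin t"
      using r by (simp add: norm_mult)
    then show "indicator (limacon_region a) (of_real r * cis t) * ennreal ((1/2 - kk a * Im (of_real r * cis t) / cmod (of_real r * cis t))^2)
       = indicator (limacon_region a) (of_real r * cis t) * ennreal ((1/2 - kk a * sin t)^2)"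
      by (simp only: mult.assoc[of "kk a"] times_divide_eq_right[symmetric])
  qed (use a in measurable)
  also have "\<dots> = (\<integral>\<^sup>+t. ennreal ((rho a t)^2 / 2 * (1/2 - kk a * sin t)^2) * indicator {0<..<2*pi} t \<partial>lborel)"
  proof (rule nn_integral_cong)
    fix t :: real
    have "ennreal ((rho a t)^2 / 2) * ennreal ((1/2 - kk a * sin t)^2) = ennreal ((rho a t)^2 / 2 * (1/2 - kk a * sin t)^2)"
      by (rule ennreal_mult[symmetric]) auto
    then show "ennreal ((rho a t)^2 / 2) * ennreal ((1/2 - kk a * sin t)^2) * indicator {0<..<2*pi} t = ennreal ((rho a t)^2 / 2 * (1/2 - kk a * sin t)^2) * indicator {0<..<2*pi} t"
      by (simp only:)
  qed
  also have "\<dots> = ennreal (Psi a (2 * pi) - Psi a 0)"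
    by (intro FTC_open) (auto simp: Psi_deriv2)
  finally show ?thesis by (simp add: Psi_value)
qed

lemma cr_self[simp]: "cr p p = 0" by (simp add: cr_eq)
lemma cr_swap: "cr q p = - cr p q" by (simp add: cr_eq)
lemma cr_zero_left[simp]: "cr 0 q = 0" by (simp add: cr_eq)

lemma not_in_hull:
  assumes "0 < cr p q" "0 < cr p s"
  shows "(0::complex) \<notin> convex hull {p, q, s}"
proof
  assume "(0::complex) \<in> convex hull {p, q, s}"
  then obtain u v w where uvw: "0 \<le> u" "0 \<le> v" "0 \<le> w" "u + v + w = 1"
    and eq: "0 = u *\<^sub>R p + v *\<^sub>R q + w *\<^sub>R s"
    unfolding convex_hull_3 by auto
  have re: "u * Re p + v * Re q + w * Re s = 0" and im: "u * Im p + v * Im q + w * Im s = 0"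
    using arg_cong[OF eq, of Re] arg_cong[OF eq, of Im] by simp_all
  have "v * cr p q + w * cr p s = 0"
    unfolding cr_eq using re im by algebra
  moreover have "0 \<le> v * cr p q" "0 \<le> w * cr p s" using uvw assms by auto
  ultimately have "v * cr p q = 0" "w * cr p s = 0" by linarith+
  then have "v = 0" "w = 0" using assms by auto
  then have "u = 1" using uvw by simp
  then have "p = 0" using eq \<open>v = 0\<close> \<open>w = 0\<close> by simp
  then show False using assms by simp
qed

lemma cr_identity: "of_real (cr q s) * p + of_real (cr s p) * q + of_real (cr p q) * s = 0"
  by (simp add: complex_eq_iff cr_eq algebra_simps)

lemma in_hull:
  assumes nz: "cr p q \<noteq> 0" "cr q s \<noteq> 0" "cr s p \<noteq> 0"
    and n1: "\<not> (0 < cr p q \<and> 0 < cr p s)"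
    and n2: "\<not> (0 < cr q s \<and> 0 < cr q p)"
    and n3: "\<not> (0 < cr s p \<and> 0 < cr s q)"
  shows "(0::complex) \<in> convex hull {p, q, s}"
proof -
  define d1 d2 d3 where "d1 = cr p q" "d2 = cr q s" "d3 = cr s p"
  have same: "(0 < d1 \<and> 0 < d2 \<and> 0 < d3) \<or> (d1 < 0 \<and> d2 < 0 \<and> d3 < 0)"
    using nz n1 n2 n3 cr_swap[of p s] cr_swap[of q p] cr_swap[of s q]
    unfolding d1_d2_d3_def by linarith
  define \<sigma> where "\<sigma> = d1 + d2 + d3"
  have \<sigma>: "\<sigma> \<noteq> 0" using same unfolding \<sigma>_def by linarith
  have pos: "0 \<le> d2 / \<sigma>" "0 \<le> d3 / \<sigma>" "0 \<le> d1 / \<sigma>"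
    using same unfolding \<sigma>_def by (auto simp: divide_simps)
  have sum: "d2 / \<sigma> + d3 / \<sigma> + d1 / \<sigma> = 1"
  proof -
    have "d2 / \<sigma> + d3 / \<sigma> + d1 / \<sigma> = (d2 + d3 + d1) / \<sigma>" by (simp add: add_divide_distrib)
    also have "d2 + d3 + d1 = \<sigma>" by (simp add: \<sigma>_def)
    finally show ?thesis using \<sigma> by simp
  qed
  have "(d2 / \<sigma>) *\<^sub>R p + (d3 / \<sigma>) *\<^sub>R q + (d1 / \<sigma>) *\<^sub>R s = (1 / \<sigma>) *\<^sub>R (of_real d2 * p + of_real d3 * q + of_real d1 * s)"
    by (simp add: scaleR_conv_of_real algebra_simps)
  also have "\<dots> = 0" using cr_identity[of q s p] unfolding d1_d2_d3_def by simp
  finally have "0 = (d2 / \<sigma>) *\<^sub>R p + (d3 / \<sigma>) *\<^sub>R q + (d1 / \<sigma>) *\<^sub>R s" by simp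
  then show ?thesis unfolding convex_hull_3 using pos sum by blast
qed

lemma closed_hull_triples: "closed {x :: complex \<times> complex \<times> complex. (0::complex) \<in> convex hull {fst x, fst (snd x), snd (snd x)}}"
proof -
  define K :: "(real \<times> real) set" where "K = {y. 0 \<le> fst y \<and> 0 \<le> snd y \<and> fst y + snd y \<le> 1}"
  define g :: "(real \<times> real) \<times> (complex \<times> complex \<times> complex) \<Rightarrow> complex" where
    "g z = fst (fst z) *\<^sub>R fst (snd z) + snd (fst z) *\<^sub>R fst (snd (snd z)) + (1 - fst (fst z) - snd (fst z)) *\<^sub>R snd (snd (snd z))" for z
  have cK: "compact K"
  proof -
    have "K \<subseteq> cbox (0,0) (1,1)" by (auto simp: K_def cbox_Pair_iff)
    moreover have "closed K" unfolding K_def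
      by (intro closed_Collect_conj closed_Collect_le continuous_intros)
    ultimately show ?thesis by (metis bounded_cbox bounded_subset compact_eq_bounded_closed)
  qed
  have cg: "continuous_on UNIV g" unfolding g_def by (intro continuous_intros)
  have cU: "closedin (top_of_set (K \<times> UNIV)) {z \<in> K \<times> UNIV. g z = 0}"
  proof -
    have "closed (K \<times> UNIV)" using closed_Times[OF compact_imp_closed[OF cK] closed_UNIV] .
    moreover have "closed {z. g z = 0}" using closed_Collect_eq[OF cg continuous_on_const] .
    ultimately have "closed (K \<times> UNIV \<inter> {z. g z = 0})" by (rule closed_Int)
    moreover have "K \<times> UNIV \<inter> {z. g z = 0} = {z \<in> K \<times> UNIV. g z = 0}" by auto
    ultimately show ?thesis by (intro closed_subset) auto
  qed
  have "closedin (top_of_set UNIV) {x. \<exists>y. y \<in> K \<and> (y, x) \<in> {z \<in> K \<times> UNIV. g z = 0}}"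
    by (rule closedin_compact_projection[OF cK cU])
  moreover have "{x. \<exists>y. y \<in> K \<and> (y, x) \<in> {z \<in> K \<times> UNIV. g z = 0}} =
     {x :: complex \<times> complex \<times> complex. (0::complex) \<in> convex hull {fst x, fst (snd x), snd (snd x)}}"
  proof (intro equalityI subsetI)
    fix x assume "x \<in> {x. \<exists>y. y \<in> K \<and> (y, x) \<in> {z \<in> K \<times> UNIV. g z = 0}}"
    then obtain u v where "0 \<le> u" "0 \<le> v" "u + v \<le> 1" "g ((u, v), x) = 0"
      by (auto simp: K_def)
    then have "0 = u *\<^sub>R fst x + v *\<^sub>R fst (snd x) + (1 - u - v) *\<^sub>R snd (snd x) \<and> 0 \<le> u \<and> 0 \<le> v \<and> 0 \<le> 1 - u - v \<and> u + v + (1 - u - v) = 1"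
      by (auto simp: g_def)
    then show "x \<in> {x. (0::complex) \<in> convex hull {fst x, fst (snd x), snd (snd x)}}"
      unfolding convex_hull_3 by blast
  next
    fix x assume "x \<in> {x :: complex \<times> complex \<times> complex. (0::complex) \<in> convex hull {fst x, fst (snd x), snd (snd x)}}"
    then obtain u v w where "0 \<le> u" "0 \<le> v" "0 \<le> w" "u + v + w = 1"
      "0 = u *\<^sub>R fst x + v *\<^sub>R fst (snd x) + w *\<^sub>R snd (snd x)"
      unfolding convex_hull_3 by auto
    moreover from this have "w = 1 - u - v" by linarith
    ultimately have "(u, v) \<in> K \<and> ((u, v), x) \<in> {z \<in> K \<times> UNIV. g z = 0}"
      by (auto simp: K_def g_def)
    then show "x \<in> {x. \<exists>y. y \<in> K \<and> (y, x) \<in> {z \<in> K \<times> UNIV. g z = 0}}" by blast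
  qed
  ultimately show ?thesis by simp
qed

lemma line_null:
  assumes "p \<noteq> 0"
  shows "emeasure lborel {z. cr p z = 0} = 0"
proof -
  have eq: "{z. cr p z = 0} = {z. (\<i> * p) \<bullet> z = 0}"
    by (auto simp: cr_eq inner_complex_def)
  have "negligible {z. (\<i> * p) \<bullet> z = 0}"
    using assms by (intro negligible_hyperplane) simp
  then have "{z. cr p z = 0} \<in> null_sets lebesgue"
    unfolding eq negligible_iff_null_sets .
  moreover have "{z. cr p z = 0} \<in> sets lborel" by measurable
  ultimately have "{z. cr p z = 0} \<in> null_sets lborel"
    using null_sets_completion_iff by blast
  then show ?thesis by auto
qed

lemma lborel3_eq: "(lborel \<Otimes>\<^sub>M lborel \<Otimes>\<^sub>M lborel) = (lborel :: (complex \<times> complex \<times> complex) measure)"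
  by (simp add: lborel_prod)

lemma triple_nn:
  fixes f :: "complex \<times> complex \<times> complex \<Rightarrow> ennreal"
  assumes [measurable]: "f \<in> borel_measurable borel"
  shows "(\<integral>\<^sup>+x. f x \<partial>lborel) = (\<integral>\<^sup>+p. \<integral>\<^sup>+q. \<integral>\<^sup>+s. f (p, q, s) \<partial>lborel \<partial>lborel \<partial>lborel)"
proof -
  have "(\<integral>\<^sup>+x. f x \<partial>lborel) = (\<integral>\<^sup>+x. f x \<partial>(lborel \<Otimes>\<^sub>M (lborel :: (complex \<times> complex) measure)))"
    by (simp add: lborel_prod)
  also have "\<dots> = (\<integral>\<^sup>+p. \<integral>\<^sup>+y. f (p, y) \<partial>lborel \<partial>lborel)"
    by (rule lborel.nn_integral_fst[symmetric]) (simp add: lborel_prod)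
  also have "\<dots> = (\<integral>\<^sup>+p. \<integral>\<^sup>+q. \<integral>\<^sup>+s. f (p, q, s) \<partial>lborel \<partial>lborel \<partial>lborel)"
  proof (rule nn_integral_cong)
    fix p :: complex
    have [measurable]: "(\<lambda>y. f (p, y)) \<in> borel_measurable borel" by measurable
    have "(\<integral>\<^sup>+y. f (p, y) \<partial>lborel) = (\<integral>\<^sup>+y. f (p, y) \<partial>(lborel \<Otimes>\<^sub>M (lborel :: complex measure)))"
      by (simp add: lborel_prod)
    also have "\<dots> = (\<integral>\<^sup>+q. \<integral>\<^sup>+s. f (p, q, s) \<partial>lborel \<partial>lborel)"
      by (rule lborel.nn_integral_fst[symmetric]) (simp add: lborel_prod)
    finally show "(\<integral>\<^sup>+y. f (p, y) \<partial>lborel) = (\<integral>\<^sup>+q. \<integral>\<^sup>+s. f (p, q, s) \<partial>lborel \<partial>lborel)" .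
  qed
  finally show ?thesis .
qed

definition gfun :: "real \<Rightarrow> complex \<Rightarrow> ennreal" where
  "gfun a q = indicator (- {0}) q * ennreal (1/2 - kk a * Im q / cmod q)"

lemma gfun_measurable[measurable]: "gfun a \<in> borel_measurable borel"
proof -
  have [measurable]: "- {0::complex} \<in> sets borel" by (intro borel_open open_Compl) simp
  show ?thesis unfolding gfun_def by measurable
qed

lemma kk_le: assumes a: "a > 1" shows "kk a \<le> 1/2"
proof -
  have D: "(2 * a^2 + 1) * pi > 0" using zero_le_power2[of a] by (intro mult_pos_pos) (linarith, simp)
  have "6 * a^2 - 8 * a + 3 > 0"
  proof -
    have "6 * a^2 - 8 * a + 3 = 6 * (a - 2/3)^2 + 1/3" by (simp add: power2_eq_square algebra_simps)
    also have "\<dots> > 0" by (simp add: add_nonneg_pos)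
    finally show ?thesis .
  qed
  then have "8 * a \<le> (2 * a^2 + 1) * 3" by (simp add: algebra_simps)
  also have "\<dots> \<le> (2 * a^2 + 1) * pi" using pi_gt3 zero_le_power2[of a]
    by (intro mult_left_mono) auto
  finally have "8 * a \<le> (2 * a^2 + 1) * pi" .
  then show ?thesis unfolding kk_def using D by (simp add: divide_simps)
qed

lemma F_nonneg: assumes a: "a > 1" shows "0 \<le> 1/2 - kk a * Im q / cmod q"
proof (cases "q = 0")
  case True then show ?thesis by simp
next
  case False
  have "Im q / cmod q \<le> 1" using abs_Im_le_cmod[of q] False by (simp add: divide_simps)
  moreover have "0 \<le> kk a" unfolding kk_def using a by (intro divide_nonneg_pos mult_pos_pos) (auto simp: add_pos_nonneg)
  ultimately have "kk a * (Im q / cmod q) \<le> kk a * 1" by (intro mult_left_mono)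
  then show ?thesis using kk_le[OF a] unfolding times_divide_eq_right mult_1_right by linarith
qed

context
  fixes a :: real
  assumes a: "a > 1"
begin

declare limacon_region_borel[measurable del]

lemma R_borel[measurable]: "limacon_region a \<in> sets borel"
  using a by (rule limacon_region_borel)

lemma R_pred[measurable]: "f \<in> borel_measurable M \<Longrightarrow> Measurable.pred M (\<lambda>x. f x \<in> limacon_region a)"
  by (rule pred_sets2[OF R_borel])

lemma half_int: "(\<integral>\<^sup>+s. indicator (limacon_region a) s * indicator {z. 0 < cr q z} s \<partial>lborel) = gfun a q"
proof -
  have "(\<integral>\<^sup>+s. indicator (limacon_region a) s * indicator {z. 0 < cr q z} s \<partial>lborel)
      = emeasure lborel (limacon_region a \<inter> {z. 0 < cr q z})"
  proof -
    have eq: "indicator (limacon_region a) s * indicator {z. 0 < cr q z} s = (indicator (limacon_region a \<inter> {z. 0 < cr q z}) s :: ennreal)" for s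
      by (simp add: indicator_inter_arith)
    have "(\<integral>\<^sup>+s. indicator (limacon_region a) s * indicator {z. 0 < cr q z} s \<partial>lborel)
        = (\<integral>\<^sup>+s. indicator (limacon_region a \<inter> {z. 0 < cr q z}) s \<partial>lborel)"
      by (simp only: eq)
    also have "\<dots> = emeasure lborel (limacon_region a \<inter> {z. 0 < cr q z})"
      by (rule nn_integral_indicator) measurable
    finally show ?thesis .
  qed
  also have "\<dots> = gfun a q"
  proof (cases "q = 0")
    case True then show ?thesis by (simp add: gfun_def)
  next
    case False then show ?thesis by (simp add: gfun_def half_measure[OF a])
  qed
  finally show ?thesis .
qed

lemma Vint_g: "(\<integral>\<^sup>+p. indicator (limacon_region a) p * gfun a p * gfun a p \<partial>lborel)
    = ennreal (1/4 + 4 * a^2 * (4 * a^2 + 1) / ((2 * a^2 + 1)^3 * pi^2))"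
proof -
  have "AE p in lborel. indicator (limacon_region a) p * gfun a p * gfun a p
      = indicator (limacon_region a) p * ennreal ((1/2 - kk a * Im p / cmod p)^2)"
    using AE_lborel_singleton[of 0]
  proof eventually_elim
    case (elim p)
    have "ennreal (1/2 - kk a * Im p / cmod p) * ennreal (1/2 - kk a * Im p / cmod p) = ennreal ((1/2 - kk a * Im p / cmod p)^2)"
      using F_nonneg[OF a, of p] by (simp add: ennreal_mult[symmetric] power2_eq_square)
    then show ?case using elim by (simp add: gfun_def mult.assoc)
  qed
  then have "(\<integral>\<^sup>+p. indicator (limacon_region a) p * gfun a p * gfun a p \<partial>lborel)
      = (\<integral>\<^sup>+p. indicator (limacon_region a) p * ennreal ((1/2 - kk a * Im p / cmod p)^2) \<partial>lborel)"
    by (rule nn_integral_cong_AE)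
  also have "\<dots> = ennreal (1/4 + 4 * a^2 * (4 * a^2 + 1) / ((2 * a^2 + 1)^3 * pi^2))"
    by (rule Vint[OF a])
  finally show ?thesis .
qed

lemma int_cmult_half: "(\<integral>\<^sup>+s. c * (indicator (limacon_region a) s * indicator {z. 0 < cr q z} s) \<partial>lborel) = c * gfun a q"
  by (subst nn_integral_cmult) (measurable, simp add: half_int)

definition A1 :: "real \<Rightarrow> (complex \<times> complex \<times> complex) set" where
  "A1 b = {(p, q, s). p \<in> limacon_region b \<and> q \<in> limacon_region b \<and> s \<in> limacon_region b \<and> 0 < cr p q \<and> 0 < cr p s}"
definition A2 :: "real \<Rightarrow> (complex \<times> complex \<times> complex) set" where
  "A2 b = {(p, q, s). p \<in> limacon_region b \<and> q \<in> limacon_region b \<and> s \<in> limacon_region b \<and> 0 < cr q s \<and> 0 < cr q p}"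
definition A3 :: "real \<Rightarrow> (complex \<times> complex \<times> complex) set" where
  "A3 b = {(p, q, s). p \<in> limacon_region b \<and> q \<in> limacon_region b \<and> s \<in> limacon_region b \<and> 0 < cr s p \<and> 0 < cr s q}"

lemma R_closed: "closed (limacon_region a)"
  unfolding limacon_region_char[OF a] by (intro closed_Collect_le continuous_intros)

lemma T_closed: "closed {x :: complex \<times> complex \<times> complex. fst x \<in> limacon_region a \<and> fst (snd x) \<in> limacon_region a \<and> snd (snd x) \<in> limacon_region a}"
proof -
  have "{x :: complex \<times> complex \<times> complex. fst x \<in> limacon_region a \<and> fst (snd x) \<in> limacon_region a \<and> snd (snd x) \<in> limacon_region a}
     = fst -` limacon_region a \<inter> (\<lambda>x. fst (snd x)) -` limacon_region a \<inter> (\<lambda>x. snd (snd x)) -` limacon_region a" by auto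
  also have "closed \<dots>" using R_closed
    by (intro closed_Int closed_vimage) (auto intro!: continuous_intros)
  finally show ?thesis .
qed

lemma cr_open: "open {x :: complex \<times> complex \<times> complex. 0 < cr (f x) (g x)}"
  if "continuous_on UNIV f" "continuous_on UNIV g"
  unfolding cr_eq using that by (intro open_Collect_less continuous_intros) auto

lemma A_sets[measurable]: "A1 a \<in> sets borel" "A2 a \<in> sets borel" "A3 a \<in> sets borel"
proof -
  let ?T = "{x :: complex \<times> complex \<times> complex. fst x \<in> limacon_region a \<and> fst (snd x) \<in> limacon_region a \<and> snd (snd x) \<in> limacon_region a}"
  have T: "?T \<in> sets borel" using T_closed by (rule borel_closed)
  have o1: "{x :: complex \<times> complex \<times> complex. 0 < cr (fst x) (fst (snd x))} \<in> sets borel"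
    by (intro borel_open cr_open continuous_intros)
  have o2: "{x :: complex \<times> complex \<times> complex. 0 < cr (fst x) (snd (snd x))} \<in> sets borel"
    by (intro borel_open cr_open continuous_intros)
  have o3: "{x :: complex \<times> complex \<times> complex. 0 < cr (fst (snd x)) (snd (snd x))} \<in> sets borel"
    by (intro borel_open cr_open continuous_intros)
  have o4: "{x :: complex \<times> complex \<times> complex. 0 < cr (fst (snd x)) (fst x)} \<in> sets borel"
    by (intro borel_open cr_open continuous_intros)
  have o5: "{x :: complex \<times> complex \<times> complex. 0 < cr (snd (snd x)) (fst x)} \<in> sets borel"
    by (intro borel_open cr_open continuous_intros)
  have o6: "{x :: complex \<times> complex \<times> complex. 0 < cr (snd (snd x)) (fst (snd x))} \<in> sets borel"
    by (intro borel_open cr_open continuous_intros)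
  have "A1 a = ?T \<inter> {x. 0 < cr (fst x) (fst (snd x))} \<inter> {x. 0 < cr (fst x) (snd (snd x))}"
    by (auto simp: A1_def)
  then show "A1 a \<in> sets borel" using T o1 o2 by simp
  have "A2 a = ?T \<inter> {x. 0 < cr (fst (snd x)) (snd (snd x))} \<inter> {x. 0 < cr (fst (snd x)) (fst x)}"
    by (auto simp: A2_def)
  then show "A2 a \<in> sets borel" using T o3 o4 by simp
  have "A3 a = ?T \<inter> {x. 0 < cr (snd (snd x)) (fst x)} \<inter> {x. 0 < cr (snd (snd x)) (fst (snd x))}"
    by (auto simp: A3_def)
  then show "A3 a \<in> sets borel" using T o5 o6 by simp
qed

lemma A1_val: "emeasure lborel (A1 a) = ennreal (1/4 + 4 * a^2 * (4 * a^2 + 1) / ((2 * a^2 + 1)^3 * pi^2))"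
proof -
  let ?iR = "indicator (limacon_region a) :: complex \<Rightarrow> ennreal"
  have "emeasure lborel (A1 a) = (\<integral>\<^sup>+x. indicator (A1 a) x \<partial>lborel)"
    by (rule nn_integral_indicator[symmetric]) measurable
  also have "\<dots> = (\<integral>\<^sup>+p. \<integral>\<^sup>+q. \<integral>\<^sup>+s. indicator (A1 a) (p, q, s) \<partial>lborel \<partial>lborel \<partial>lborel)"
    by (rule triple_nn) measurable
  also have "\<dots> = (\<integral>\<^sup>+p. \<integral>\<^sup>+q. (?iR p * ?iR q * indicator {z. 0 < cr p z} q) * gfun a p \<partial>lborel \<partial>lborel)"
  proof (intro nn_integral_cong)
    fix p q :: complex
    have "(\<integral>\<^sup>+s. indicator (A1 a) (p, q, s) \<partial>lborel) = (\<integral>\<^sup>+s. (?iR p * ?iR q * indicator {z. 0 < cr p z} q) * (?iR s * indicator {z. 0 < cr p z} s) \<partial>lborel)"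
      by (rule nn_integral_cong) (auto simp: A1_def indicator_def)
    also have "\<dots> = (?iR p * ?iR q * indicator {z. 0 < cr p z} q) * gfun a p"
      by (rule int_cmult_half)
    finally show "(\<integral>\<^sup>+s. indicator (A1 a) (p, q, s) \<partial>lborel) = (?iR p * ?iR q * indicator {z. 0 < cr p z} q) * gfun a p" .
  qed
  also have "\<dots> = (\<integral>\<^sup>+p. ?iR p * gfun a p * gfun a p \<partial>lborel)"
  proof (intro nn_integral_cong)
    fix p :: complex
    have "(\<integral>\<^sup>+q. (?iR p * ?iR q * indicator {z. 0 < cr p z} q) * gfun a p \<partial>lborel) = (\<integral>\<^sup>+q. (?iR p * gfun a p) * (?iR q * indicator {z. 0 < cr p z} q) \<partial>lborel)"
      by (rule nn_integral_cong) (simp add: mult_ac)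
    also have "\<dots> = ?iR p * gfun a p * gfun a p"
      by (rule int_cmult_half)
    finally show "(\<integral>\<^sup>+q. (?iR p * ?iR q * indicator {z. 0 < cr p z} q) * gfun a p \<partial>lborel) = ?iR p * gfun a p * gfun a p" .
  qed
  also have "\<dots> = ennreal (1/4 + 4 * a^2 * (4 * a^2 + 1) / ((2 * a^2 + 1)^3 * pi^2))"
    by (rule Vint_g)
  finally show ?thesis .
qed

lemma A2_val: "emeasure lborel (A2 a) = ennreal (1/4 + 4 * a^2 * (4 * a^2 + 1) / ((2 * a^2 + 1)^3 * pi^2))"
proof -
  let ?iR = "indicator (limacon_region a) :: complex \<Rightarrow> ennreal"
  have "emeasure lborel (A2 a) = (\<integral>\<^sup>+x. indicator (A2 a) x \<partial>lborel)"
    by (rule nn_integral_indicator[symmetric]) measurable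
  also have "\<dots> = (\<integral>\<^sup>+p. \<integral>\<^sup>+q. \<integral>\<^sup>+s. indicator (A2 a) (p, q, s) \<partial>lborel \<partial>lborel \<partial>lborel)"
    by (rule triple_nn) measurable
  also have "\<dots> = (\<integral>\<^sup>+p. \<integral>\<^sup>+q. (?iR p * ?iR q * indicator {z. 0 < cr q z} p) * gfun a q \<partial>lborel \<partial>lborel)"
  proof (intro nn_integral_cong)
    fix p q :: complex
    have "(\<integral>\<^sup>+s. indicator (A2 a) (p, q, s) \<partial>lborel) = (\<integral>\<^sup>+s. (?iR p * ?iR q * indicator {z. 0 < cr q z} p) * (?iR s * indicator {z. 0 < cr q z} s) \<partial>lborel)"
      by (rule nn_integral_cong) (auto simp: A2_def indicator_def)
    also have "\<dots> = (?iR p * ?iR q * indicator {z. 0 < cr q z} p) * gfun a q"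
      by (rule int_cmult_half)
    finally show "(\<integral>\<^sup>+s. indicator (A2 a) (p, q, s) \<partial>lborel) = (?iR p * ?iR q * indicator {z. 0 < cr q z} p) * gfun a q" .
  qed
  also have "\<dots> = (\<integral>\<^sup>+q. \<integral>\<^sup>+p. (?iR p * ?iR q * indicator {z. 0 < cr q z} p) * gfun a q \<partial>lborel \<partial>lborel)"
    by (rule lborel_pair.Fubini'[where f="\<lambda>q p. (?iR p * ?iR q * indicator {z. 0 < cr q z} p) * gfun a q"]) measurable
  also have "\<dots> = (\<integral>\<^sup>+q. ?iR q * gfun a q * gfun a q \<partial>lborel)"
  proof (intro nn_integral_cong)
    fix q :: complex
    have "(\<integral>\<^sup>+p. (?iR p * ?iR q * indicator {z. 0 < cr q z} p) * gfun a q \<partial>lborel) = (\<integral>\<^sup>+p. (?iR q * gfun a q) * (?iR p * indicator {z. 0 < cr q z} p) \<partial>lborel)"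
      by (rule nn_integral_cong) (simp add: mult_ac)
    also have "\<dots> = ?iR q * gfun a q * gfun a q"
      by (rule int_cmult_half)
    finally show "(\<integral>\<^sup>+p. (?iR p * ?iR q * indicator {z. 0 < cr q z} p) * gfun a q \<partial>lborel) = ?iR q * gfun a q * gfun a q" .
  qed
  also have "\<dots> = ennreal (1/4 + 4 * a^2 * (4 * a^2 + 1) / ((2 * a^2 + 1)^3 * pi^2))"
    by (rule Vint_g)
  finally show ?thesis .
qed

lemma A3_val: "emeasure lborel (A3 a) = ennreal (1/4 + 4 * a^2 * (4 * a^2 + 1) / ((2 * a^2 + 1)^3 * pi^2))"
proof -
  let ?iR = "indicator (limacon_region a) :: complex \<Rightarrow> ennreal"
  have "emeasure lborel (A3 a) = (\<integral>\<^sup>+x. indicator (A3 a) x \<partial>lborel)"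
    by (rule nn_integral_indicator[symmetric]) measurable
  also have "\<dots> = (\<integral>\<^sup>+p. \<integral>\<^sup>+q. \<integral>\<^sup>+s. indicator (A3 a) (p, q, s) \<partial>lborel \<partial>lborel \<partial>lborel)"
    by (rule triple_nn) measurable
  also have "\<dots> = (\<integral>\<^sup>+p. \<integral>\<^sup>+s. \<integral>\<^sup>+q. indicator (A3 a) (p, q, s) \<partial>lborel \<partial>lborel \<partial>lborel)"
  proof (rule nn_integral_cong)
    fix p :: complex
    show "(\<integral>\<^sup>+q. \<integral>\<^sup>+s. indicator (A3 a) (p, q, s) \<partial>lborel \<partial>lborel) = (\<integral>\<^sup>+s. \<integral>\<^sup>+q. indicator (A3 a) (p, q, s) \<partial>lborel \<partial>lborel)"
      by (rule lborel_pair.Fubini'[where f="\<lambda>s q. indicator (A3 a) (p, q, s) :: ennreal"]) measurable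
  qed
  also have "\<dots> = (\<integral>\<^sup>+p. \<integral>\<^sup>+s. (?iR p * ?iR s * indicator {z. 0 < cr s z} p) * gfun a s \<partial>lborel \<partial>lborel)"
  proof (intro nn_integral_cong)
    fix p s :: complex
    have "(\<integral>\<^sup>+q. indicator (A3 a) (p, q, s) \<partial>lborel) = (\<integral>\<^sup>+q. (?iR p * ?iR s * indicator {z. 0 < cr s z} p) * (?iR q * indicator {z. 0 < cr s z} q) \<partial>lborel)"
      by (rule nn_integral_cong) (auto simp: A3_def indicator_def)
    also have "\<dots> = (?iR p * ?iR s * indicator {z. 0 < cr s z} p) * gfun a s"
      by (rule int_cmult_half)
    finally show "(\<integral>\<^sup>+q. indicator (A3 a) (p, q, s) \<partial>lborel) = (?iR p * ?iR s * indicator {z. 0 < cr s z} p) * gfun a s" .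
  qed
  also have "\<dots> = (\<integral>\<^sup>+s. \<integral>\<^sup>+p. (?iR p * ?iR s * indicator {z. 0 < cr s z} p) * gfun a s \<partial>lborel \<partial>lborel)"
    by (rule lborel_pair.Fubini'[where f="\<lambda>s p. (?iR p * ?iR s * indicator {z. 0 < cr s z} p) * gfun a s"]) measurable
  also have "\<dots> = (\<integral>\<^sup>+s. ?iR s * gfun a s * gfun a s \<partial>lborel)"
  proof (intro nn_integral_cong)
    fix s :: complex
    have "(\<integral>\<^sup>+p. (?iR p * ?iR s * indicator {z. 0 < cr s z} p) * gfun a s \<partial>lborel) = (\<integral>\<^sup>+p. (?iR s * gfun a s) * (?iR p * indicator {z. 0 < cr s z} p) \<partial>lborel)"
      by (rule nn_integral_cong) (simp add: mult_ac)
    also have "\<dots> = ?iR s * gfun a s * gfun a s"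
      by (rule int_cmult_half)
    finally show "(\<integral>\<^sup>+p. (?iR p * ?iR s * indicator {z. 0 < cr s z} p) * gfun a s \<partial>lborel) = ?iR s * gfun a s * gfun a s" .
  qed
  also have "\<dots> = ennreal (1/4 + 4 * a^2 * (4 * a^2 + 1) / ((2 * a^2 + 1)^3 * pi^2))"
    by (rule Vint_g)
  finally show ?thesis .
qed

lemma line_int0: "p \<noteq> 0 \<Longrightarrow> (\<integral>\<^sup>+s. indicator {z. cr p z = 0} s \<partial>lborel) = 0"
  by (subst nn_integral_indicator) (measurable, simp add: line_null)

lemma line_AE: "p \<noteq> 0 \<Longrightarrow> AE q in lborel. (indicator {z. cr p z = 0} q :: ennreal) = 0"
proof -
  assume p: "p \<noteq> 0"
  have "{z. cr p z = 0} \<in> null_sets lborel" using line_null[OF p] by (intro null_setsI) measurable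
  from AE_not_in[OF this] show ?thesis by eventually_elim simp
qed

lemma emeasure_triple:
  fixes X :: "(complex \<times> complex \<times> complex) set"
  assumes X: "X \<in> sets borel"
  shows "emeasure lborel X = (\<integral>\<^sup>+p. \<integral>\<^sup>+q. \<integral>\<^sup>+s. indicator X (p, q, s) \<partial>lborel \<partial>lborel \<partial>lborel)"
proof -
  have "emeasure lborel X = (\<integral>\<^sup>+x. indicator X x \<partial>lborel)"
    using X by (intro nn_integral_indicator[symmetric]) simp
  also have "\<dots> = (\<integral>\<^sup>+p. \<integral>\<^sup>+q. \<integral>\<^sup>+s. indicator X (p, q, s) \<partial>lborel \<partial>lborel \<partial>lborel)"
    using X by (intro triple_nn) simp
  finally show ?thesis .
qed

definition NN :: "(complex \<times> complex \<times> complex) set" where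
  "NN = {x. cr (fst x) (fst (snd x)) = 0 \<or> cr (fst (snd x)) (snd (snd x)) = 0 \<or> cr (snd (snd x)) (fst x) = 0}"

lemma NN_null: "NN \<in> null_sets lborel"
proof -
  have N1: "{x :: complex \<times> complex \<times> complex. cr (fst x) (fst (snd x)) = 0} \<in> null_sets lborel"
  proof (rule null_setsI)
    show "{x :: complex \<times> complex \<times> complex. cr (fst x) (fst (snd x)) = 0} \<in> sets lborel"
      by (simp, intro borel_closed closed_Collect_eq continuous_intros) (auto simp: cr_eq intro!: continuous_intros)
    then have "emeasure lborel {x :: complex \<times> complex \<times> complex. cr (fst x) (fst (snd x)) = 0}
        = (\<integral>\<^sup>+p. \<integral>\<^sup>+q. \<integral>\<^sup>+s. indicator {x :: complex \<times> complex \<times> complex. cr (fst x) (fst (snd x)) = 0} (p, q, s) \<partial>lborel \<partial>lborel \<partial>lborel)"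
      by (intro emeasure_triple) simp
    also have "\<dots> = (\<integral>\<^sup>+p. 0 \<partial>(lborel :: complex measure))"
    proof (rule nn_integral_cong_AE)
      show "AE p in lborel. (\<integral>\<^sup>+q. \<integral>\<^sup>+s. indicator {x :: complex \<times> complex \<times> complex. cr (fst x) (fst (snd x)) = 0} (p, q, s) \<partial>lborel \<partial>lborel) = 0"
        using AE_lborel_singleton[of 0]
      proof eventually_elim
        case (elim p)
        have "(\<integral>\<^sup>+q. \<integral>\<^sup>+s. indicator {x :: complex \<times> complex \<times> complex. cr (fst x) (fst (snd x)) = 0} (p, q, s) \<partial>lborel \<partial>lborel) = (\<integral>\<^sup>+q. 0 \<partial>(lborel :: complex measure))"
        proof (rule nn_integral_cong_AE)
          show "AE q in lborel. (\<integral>\<^sup>+s. indicator {x :: complex \<times> complex \<times> complex. cr (fst x) (fst (snd x)) = 0} (p, q, s) \<partial>lborel) = 0"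
            using line_AE[OF elim] by eventually_elim (simp add: indicator_def)
        qed
        then show ?case by simp
      qed
    qed
    finally show "emeasure lborel {x :: complex \<times> complex \<times> complex. cr (fst x) (fst (snd x)) = 0} = 0" by simp
  qed
  have N2: "{x :: complex \<times> complex \<times> complex. cr (fst (snd x)) (snd (snd x)) = 0} \<in> null_sets lborel"
  proof (rule null_setsI)
    show "{x :: complex \<times> complex \<times> complex. cr (fst (snd x)) (snd (snd x)) = 0} \<in> sets lborel"
      by (simp, intro borel_closed closed_Collect_eq continuous_intros) (auto simp: cr_eq intro!: continuous_intros)
    then have "emeasure lborel {x :: complex \<times> complex \<times> complex. cr (fst (snd x)) (snd (snd x)) = 0}
        = (\<integral>\<^sup>+p. \<integral>\<^sup>+q. \<integral>\<^sup>+s. indicator {x :: complex \<times> complex \<times> complex. cr (fst (snd x)) (snd (snd x)) = 0} (p, q, s) \<partial>lborel \<partial>lborel \<partial>lborel)"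
      by (intro emeasure_triple) simp
    also have "\<dots> = (\<integral>\<^sup>+p. \<integral>\<^sup>+q. 0 \<partial>(lborel :: complex measure) \<partial>(lborel :: complex measure))"
    proof (rule nn_integral_cong)
      fix p :: complex
      show "(\<integral>\<^sup>+q. \<integral>\<^sup>+s. indicator {x :: complex \<times> complex \<times> complex. cr (fst (snd x)) (snd (snd x)) = 0} (p, q, s) \<partial>lborel \<partial>lborel) = (\<integral>\<^sup>+q. 0 \<partial>(lborel :: complex measure))"
      proof (rule nn_integral_cong_AE)
        show "AE q in lborel. (\<integral>\<^sup>+s. indicator {x :: complex \<times> complex \<times> complex. cr (fst (snd x)) (snd (snd x)) = 0} (p, q, s) \<partial>lborel) = 0"
          using AE_lborel_singleton[of 0]
        proof eventually_elim
          case (elim q)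
          have "(\<integral>\<^sup>+s. indicator {x :: complex \<times> complex \<times> complex. cr (fst (snd x)) (snd (snd x)) = 0} (p, q, s) \<partial>lborel)
             = (\<integral>\<^sup>+s. indicator {z. cr q z = 0} s \<partial>lborel)"
            by (rule nn_integral_cong) (simp add: indicator_def)
          then show ?case using line_int0[OF elim] by simp
        qed
      qed
    qed
    finally show "emeasure lborel {x :: complex \<times> complex \<times> complex. cr (fst (snd x)) (snd (snd x)) = 0} = 0" by simp
  qed
  have N3: "{x :: complex \<times> complex \<times> complex. cr (snd (snd x)) (fst x) = 0} \<in> null_sets lborel"
  proof (rule null_setsI)
    show "{x :: complex \<times> complex \<times> complex. cr (snd (snd x)) (fst x) = 0} \<in> sets lborel"
      by (simp, intro borel_closed closed_Collect_eq continuous_intros) (auto simp: cr_eq intro!: continuous_intros)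
    then have "emeasure lborel {x :: complex \<times> complex \<times> complex. cr (snd (snd x)) (fst x) = 0}
        = (\<integral>\<^sup>+p. \<integral>\<^sup>+q. \<integral>\<^sup>+s. indicator {x :: complex \<times> complex \<times> complex. cr (snd (snd x)) (fst x) = 0} (p, q, s) \<partial>lborel \<partial>lborel \<partial>lborel)"
      by (intro emeasure_triple) simp
    also have "\<dots> = (\<integral>\<^sup>+p. 0 \<partial>(lborel :: complex measure))"
    proof (rule nn_integral_cong_AE)
      show "AE p in lborel. (\<integral>\<^sup>+q. \<integral>\<^sup>+s. indicator {x :: complex \<times> complex \<times> complex. cr (snd (snd x)) (fst x) = 0} (p, q, s) \<partial>lborel \<partial>lborel) = 0"
        using AE_lborel_singleton[of 0]
      proof eventually_elim
        case (elim p)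
        have "(\<integral>\<^sup>+q. \<integral>\<^sup>+s. indicator {x :: complex \<times> complex \<times> complex. cr (snd (snd x)) (fst x) = 0} (p, q, s) \<partial>lborel \<partial>lborel) = (\<integral>\<^sup>+q. 0 \<partial>(lborel :: complex measure))"
        proof (rule nn_integral_cong)
          fix q :: complex
          have "(\<integral>\<^sup>+s. indicator {x :: complex \<times> complex \<times> complex. cr (snd (snd x)) (fst x) = 0} (p, q, s) \<partial>lborel)
             = (\<integral>\<^sup>+s. indicator {z. cr p z = 0} s \<partial>lborel)"
            by (rule nn_integral_cong) (simp add: indicator_def cr_swap[of _ p])
          then show "(\<integral>\<^sup>+s. indicator {x :: complex \<times> complex \<times> complex. cr (snd (snd x)) (fst x) = 0} (p, q, s) \<partial>lborel) = 0"
            using line_int0[OF elim] by simp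
        qed
        then show ?case by simp
      qed
    qed
    finally show "emeasure lborel {x :: complex \<times> complex \<times> complex. cr (snd (snd x)) (fst x) = 0} = 0" by simp
  qed
  have eq: "NN = {x :: complex \<times> complex \<times> complex. cr (fst x) (fst (snd x)) = 0} \<union> {x. cr (fst (snd x)) (snd (snd x)) = 0} \<union> {x. cr (snd (snd x)) (fst x) = 0}"
    by (auto simp: NN_def)
  show ?thesis unfolding eq by (intro null_sets.Un N1 N2 N3)
qed

end

definition SS :: "real \<Rightarrow> (complex \<times> complex \<times> complex) set" where
  "SS a = {(p, q, s). p \<in> limacon_region a \<and> q \<in> limacon_region a \<and> s \<in> limacon_region a \<and> (0::complex) \<in> convex hull {p, q, s}}"
definition TT :: "real \<Rightarrow> (complex \<times> complex \<times> complex) set" where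
  "TT a = {(p, q, s). p \<in> limacon_region a \<and> q \<in> limacon_region a \<and> s \<in> limacon_region a}"

lemma cr_pos_swap: "0 < cr p q \<Longrightarrow> 0 < cr q p \<Longrightarrow> False"
  using cr_swap[of q p] by simp

context
  fixes a :: real
  assumes a: "a > 1"
begin

declare limacon_region_borel[measurable del]
lemmas R_borel_a[measurable] = R_borel[OF a]

lemma TT_eq: "TT a = {x :: complex \<times> complex \<times> complex. fst x \<in> limacon_region a \<and> fst (snd x) \<in> limacon_region a \<and> snd (snd x) \<in> limacon_region a}"
  by (auto simp: TT_def)

lemma TT_sets[measurable]: "TT a \<in> sets borel"
  unfolding TT_eq using T_closed[OF a] by (rule borel_closed)

lemma SS_sets[measurable]: "SS a \<in> sets borel"
proof -
  have "SS a = TT a \<inter> {x :: complex \<times> complex \<times> complex. (0::complex) \<in> convex hull {fst x, fst (snd x), snd (snd x)}}"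
    by (auto simp: SS_def TT_def)
  also have "\<dots> \<in> sets borel"
    by (intro sets.Int TT_sets borel_closed closed_hull_triples)
  finally show ?thesis .
qed

lemma TT_val: "emeasure lborel (TT a) = 1"
proof -
  let ?iR = "indicator (limacon_region a) :: complex \<Rightarrow> ennreal"
  have R1: "(\<integral>\<^sup>+s. ?iR s \<partial>lborel) = 1"
    using area_limacon[OF a] R_borel[OF a] by simp
  have "emeasure lborel (TT a) = (\<integral>\<^sup>+p. \<integral>\<^sup>+q. \<integral>\<^sup>+s. indicator (TT a) (p, q, s) \<partial>lborel \<partial>lborel \<partial>lborel)"
    by (rule emeasure_triple[OF a]) (rule TT_sets)
  also have "\<dots> = (\<integral>\<^sup>+p. \<integral>\<^sup>+q. ?iR p * ?iR q \<partial>lborel \<partial>lborel)"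
  proof (intro nn_integral_cong)
    fix p q :: complex
    have "(\<integral>\<^sup>+s. indicator (TT a) (p, q, s) \<partial>lborel) = (\<integral>\<^sup>+s. (?iR p * ?iR q) * ?iR s \<partial>lborel)"
      by (rule nn_integral_cong) (auto simp: TT_def indicator_def)
    also have "\<dots> = ?iR p * ?iR q"
      using R_borel[OF a] by (subst nn_integral_cmult) (measurable, simp add: R1)
    finally show "(\<integral>\<^sup>+s. indicator (TT a) (p, q, s) \<partial>lborel) = ?iR p * ?iR q" .
  qed
  also have "\<dots> = (\<integral>\<^sup>+p. ?iR p \<partial>lborel)"
  proof (intro nn_integral_cong)
    fix p :: complex
    show "(\<integral>\<^sup>+q. ?iR p * ?iR q \<partial>lborel) = ?iR p"
      using R_borel[OF a] by (subst nn_integral_cmult) (measurable, simp add: R1)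
  qed
  also have "\<dots> = 1" by (rule R1)
  finally show ?thesis .
qed

lemma SS_val: "emeasure lborel (SS a) + ennreal (3 * (1/4 + 4 * a^2 * (4 * a^2 + 1) / ((2 * a^2 + 1)^3 * pi^2))) = 1"
proof -
  define V where "V = 1/4 + 4 * a^2 * (4 * a^2 + 1) / ((2 * a^2 + 1)^3 * pi^2)"
  have V: "V \<ge> 0" unfolding V_def by (intro add_nonneg_nonneg divide_nonneg_nonneg mult_nonneg_nonneg) auto
  note [measurable] = A_sets[OF a] SS_sets TT_sets
  have d1: "SS a \<inter> A1 a = {}"
    by (auto simp: SS_def A1_def[OF a] dest: not_in_hull)
  have d2: "(SS a \<union> A1 a) \<inter> A2 a = {}"
  proof -
    have "SS a \<inter> A2 a = {}"
    proof (auto simp: SS_def A2_def[OF a])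
      fix p q s assume "0 < cr q s" "0 < cr q p" "(0::complex) \<in> convex hull {p, q, s}"
      moreover have "{p, q, s} = {q, s, p}" by auto
      ultimately show False using not_in_hull[of q s p] by simp
    qed
    moreover have "A1 a \<inter> A2 a = {}"
      by (auto simp: A1_def[OF a] A2_def[OF a] dest: cr_pos_swap)
    ultimately show ?thesis by blast
  qed
  have d3: "(SS a \<union> A1 a \<union> A2 a) \<inter> A3 a = {}"
  proof -
    have "SS a \<inter> A3 a = {}"
    proof (auto simp: SS_def A3_def[OF a])
      fix p q s assume "0 < cr s p" "0 < cr s q" "(0::complex) \<in> convex hull {p, q, s}"
      moreover have "{p, q, s} = {s, p, q}" by auto
      ultimately show False using not_in_hull[of s p q] by simp
    qed
    moreover have "A1 a \<inter> A3 a = {}"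
      by (auto simp: A1_def[OF a] A3_def[OF a] dest: cr_pos_swap)
    moreover have "A2 a \<inter> A3 a = {}"
      by (auto simp: A2_def[OF a] A3_def[OF a] dest: cr_pos_swap)
    ultimately show ?thesis by blast
  qed
  define U where "U = SS a \<union> A1 a \<union> A2 a \<union> A3 a"
  have [measurable]: "U \<in> sets borel" unfolding U_def by measurable
  have eU: "emeasure lborel U = emeasure lborel (SS a) + emeasure lborel (A1 a) + emeasure lborel (A2 a) + emeasure lborel (A3 a)"
  proof -
    have "emeasure lborel (SS a \<union> A1 a) = emeasure lborel (SS a) + emeasure lborel (A1 a)"
      using d1 by (intro plus_emeasure[symmetric]) auto
    moreover have "emeasure lborel (SS a \<union> A1 a \<union> A2 a) = emeasure lborel (SS a \<union> A1 a) + emeasure lborel (A2 a)"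
      using d2 by (intro plus_emeasure[symmetric]) auto
    moreover have "emeasure lborel U = emeasure lborel (SS a \<union> A1 a \<union> A2 a) + emeasure lborel (A3 a)"
      unfolding U_def using d3 by (intro plus_emeasure[symmetric]) auto
    ultimately show ?thesis by simp
  qed
  have sub1: "U \<subseteq> TT a"
    unfolding U_def by (auto simp: SS_def A1_def[OF a] A2_def[OF a] A3_def[OF a] TT_def)
  have sub2: "TT a \<subseteq> U \<union> NN"
  proof
    fix x assume x: "x \<in> TT a"
    obtain p q s where xe: "x = (p, q, s)" by (cases x) auto
    show "x \<in> U \<union> NN"
    proof (cases "x \<in> NN \<or> x \<in> A1 a \<or> x \<in> A2 a \<or> x \<in> A3 a")
      case True then show ?thesis unfolding U_def by blast
    next
      case False
      then have "cr p q \<noteq> 0" "cr q s \<noteq> 0" "cr s p \<noteq> 0"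
        "\<not> (0 < cr p q \<and> 0 < cr p s)" "\<not> (0 < cr q s \<and> 0 < cr q p)" "\<not> (0 < cr s p \<and> 0 < cr s q)"
        using x by (auto simp: xe NN_def[OF a] A1_def[OF a] A2_def[OF a] A3_def[OF a] TT_def)
      then have "(0::complex) \<in> convex hull {p, q, s}" by (rule in_hull)
      then show ?thesis using x by (auto simp: xe U_def SS_def TT_def)
    qed
  qed
  have "emeasure lborel (TT a) = emeasure lborel U"
  proof (rule antisym)
    show "emeasure lborel U \<le> emeasure lborel (TT a)" using sub1 by (intro emeasure_mono) auto
    have "emeasure lborel (TT a) \<le> emeasure lborel (U \<union> NN)" using sub2 NN_null[OF a] by (intro emeasure_mono) auto
    also have "\<dots> = emeasure lborel U" using NN_null[OF a] by (intro emeasure_Un_null_set) auto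
    finally show "emeasure lborel (TT a) \<le> emeasure lborel U" .
  qed
  then have h: "1 = emeasure lborel (SS a) + ennreal V + ennreal V + ennreal V"
    using eU TT_val A1_val[OF a] A2_val[OF a] A3_val[OF a] by (simp add: V_def)
  have h3: "ennreal (3 * V) = ennreal V + ennreal V + ennreal V"
    using V by (simp add: ennreal_plus[symmetric])
  show ?thesis unfolding V_def[symmetric] h3 using h by (simp add: add.assoc)
qed

end

theorem mainTheorem5:
  fixes a :: real
  assumes "a > 1"
  shows "measure lborel (limacon_region a) = 1 \<and>
         triangle_contains_origin_prob (limacon_region a) =
           1/4 - 12 * a^2 * (4 * a^2 + 1) / ((2 * a^2 + 1)^3 * pi^2)"
proof -
  have a: "a > 1" by fact
  have m1: "measure lborel (limacon_region a) = 1"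
    using area_limacon[OF a] by (simp add: measure_def)
  define V where "V = 1/4 + 4 * a^2 * (4 * a^2 + 1) / ((2 * a^2 + 1)^3 * pi^2)"
  have V: "V \<ge> 0" unfolding V_def by (intro add_nonneg_nonneg divide_nonneg_nonneg mult_nonneg_nonneg) auto
  have e: "emeasure lborel (SS a) + ennreal (3 * V) = 1" using SS_val[OF a] by (simp add: V_def)
  have "emeasure lborel (SS a) \<le> emeasure lborel (SS a) + ennreal (3 * V)" by simp
  then have "emeasure lborel (SS a) \<le> 1" using e by simp
  then have fin: "emeasure lborel (SS a) \<noteq> top" by (auto simp: top_unique)
  have "ennreal (measure lborel (SS a)) + ennreal (3 * V) = ennreal 1"
    using e fin by (simp add: emeasure_eq_ennreal_measure)
  then have "ennreal (measure lborel (SS a) + 3 * V) = ennreal 1"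
    using V by (subst ennreal_plus) auto
  then have mS: "measure lborel (SS a) = 1 - 3 * V"
    using V by (subst (asm) ennreal_inj) auto
  have "triangle_contains_origin_prob (limacon_region a) = measure lborel (SS a) / 1 ^ 3"
    unfolding triangle_contains_origin_prob_def m1 lborel3_eq SS_def ..
  also have "\<dots> = 1/4 - 12 * a^2 * (4 * a^2 + 1) / ((2 * a^2 + 1)^3 * pi^2)"
    unfolding mS V_def by simp
  finally show ?thesis using m1 by simp
qed

end
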